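(* Let $k,m$ be integers with $k\geqslant 3$ and $m>2k$, and let $n=2k-3$. Then $\alpha(m,n,k)=h(m,n,k)$, and every $(m,n,k)$-intersecting family of maximum cardinality equals $\mathcal{H}_t^{m,n,k}$ for some $t\in[n]$.
   Context: For positive integers $a\leqslant b$, $[a,b]=\{a,a+1,\dots,b\}$ and $[a]=[1,a]$; $\binom{X}{k}$ denotes the family of all $k$-subsets of a set $X$. A family of sets is intersecting if no two of its members are disjoint. For integers $0<k\leqslant n<2k<m$, an $(m,n,k)$-intersecting family is an intersecting family $\mathcal{F}$ with $\binom{[n]}{k}\subseteq\mathcal{F}\subseteq\binom{[m]}{k}$, and $\alpha(m,n,k)$ is the maximum cardinality of an $(m,n,k)$-intersecting family. Define $h(m,n,k)=\binom{n}{k}+\sum_{i=1}^{2k-n-1}\binom{n-1}{k-i-1}\binom{m-n}{i}$. For $t\in[n]$, define \[ \mathcal{H}_t^{m,n,k}=\binom{[n]}{k}\cup\bigcup_{i=1}^{2k-n-1}\left\{A\cup B\cup\{t\}\ \middle|\ A\in\binom{[n]\setminus\{t\}}{k-i-1},\ B\in\binom{[n+1,m]}{i}\right\}, \] an $(m,n,k)$-intersecting family of cardinality $h(m,n,k)$. *)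

theory Defs
  imports Main
begin

definition ksubsets :: "nat set \<Rightarrow> nat \<Rightarrow> nat set set" where
  "ksubsets X k = {A. A \<subseteq> X \<and> card A = k}"

definition intersecting :: "nat set set \<Rightarrow> bool" where
  "intersecting F \<longleftrightarrow> (\<forall>A\<in>F. \<forall>B\<in>F. A \<inter> B \<noteq> {})"

definition mnk_intersecting :: "nat \<Rightarrow> nat \<Rightarrow> nat \<Rightarrow> nat set set \<Rightarrow> bool" where
  "mnk_intersecting m n k F \<longleftrightarrow> intersecting F \<and>
     ksubsets {1..n} k \<subseteq> F \<and> F \<subseteq> ksubsets {1..m} k"

definition alpha :: "nat \<Rightarrow> nat \<Rightarrow> nat \<Rightarrow> nat" where
  "alpha m n k = Max (card ` {F. mnk_intersecting m n k F})"

definition h :: "nat \<Rightarrow> nat \<Rightarrow> nat \<Rightarrow> nat" where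
  "h m n k = (n choose k) +
     (\<Sum>i=1..2*k-n-1. ((n-1) choose (k-i-1)) * ((m-n) choose i))"

definition H :: "nat \<Rightarrow> nat \<Rightarrow> nat \<Rightarrow> nat \<Rightarrow> nat set set" where
  "H m n k t = ksubsets {1..n} k \<union>
     (\<Union>i\<in>{1..2*k-n-1}. {A \<union> B \<union> {t} | A B.
        A \<in> ksubsets ({1..n} - {t}) (k-i-1) \<and> B \<in> ksubsets {n+1..m} i})"

end

theory Submission
  imports Defs "HOL-Combinatorics.Multiset_Permutations"
begin

definition pos :: "nat \<Rightarrow> nat \<Rightarrow> nat \<Rightarrow> nat set" where
  "pos n s j = (\<lambda>i. (j + i) mod n) ` {..<s}"

lemma mod_lt2: "(a::nat) < 2*n \<Longrightarrow> a mod n = (if a < n then a else a - n)"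
  by (simp add: le_mod_geq)

lemma pos_mem:
  assumes "a < n" "j < n" "s < n"
  shows "a \<in> pos n s j \<longleftrightarrow> (if j \<le> a then a - j < s else a + n - j < s)"
proof
  assume "a \<in> pos n s j"
  then obtain i where i: "i < s" "a = (j + i) mod n" unfolding pos_def by auto
  have "j + i < 2*n" using assms i by linarith
  then have "a = (if j + i < n then j + i else j + i - n)" using i mod_lt2 by metis
  then show "(if j \<le> a then a - j < s else a + n - j < s)" using i assms by (auto split: if_splits)
next
  assume h: "(if j \<le> a then a - j < s else a + n - j < s)"
  show "a \<in> pos n s j"
  proof (cases "j \<le> a")
    case True
    then have "a = (j + (a - j)) mod n" using assms by simp
    then show ?thesis unfolding pos_def using h True by (auto intro!: image_eqI[where x="a-j"])
  next
    case False
    have "j + (a + n - j) < 2*n" "n \<le> j + (a + n - j)" using assms False by linarith+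
    then have "(j + (a + n - j)) mod n = a" using mod_lt2[of "j + (a + n - j)" n] assms False by auto
    then show ?thesis unfolding pos_def using h False by (auto intro!: image_eqI[where x="a + n - j"])
  qed
qed

lemma pos_sub: "0 < n \<Longrightarrow> pos n s j \<subseteq> {..<n}"
  unfolding pos_def by auto

lemma card_pos: assumes "s \<le> n" "j < n" shows "card (pos n s j) = s"
proof -
  have "inj_on (\<lambda>i. (j + i) mod n) {..<s}"
  proof (rule inj_onI)
    fix x y assume xy: "x \<in> {..<s}" "y \<in> {..<s}" "(j + x) mod n = (j + y) mod n"
    have "j + x < 2*n" "j + y < 2*n" using xy assms by auto
    then show "x = y" using xy(3) mod_lt2[of "j+x" n] mod_lt2[of "j+y" n] xy assms
      by (auto split: if_splits)
  qed
  then show ?thesis unfolding pos_def by (simp add: card_image)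
qed

definition ival :: "nat \<Rightarrow> 'a list \<Rightarrow> nat \<Rightarrow> 'a set" where
  "ival s xs j = (\<lambda>a. xs ! a) ` pos (length xs) s j"

lemma nth_in_image_distinct:
  assumes "distinct xs" "a < length xs" "P \<subseteq> {..<length xs}"
  shows "xs ! a \<in> (\<lambda>b. xs ! b) ` P \<longleftrightarrow> a \<in> P"
  using assms nth_eq_iff_index_eq by fastforce

lemma image_nth_inter:
  assumes "distinct xs" "P \<subseteq> {..<length xs}" "Q \<subseteq> {..<length xs}"
  shows "(\<lambda>b. xs ! b) ` P \<inter> (\<lambda>b. xs ! b) ` Q = (\<lambda>b. xs ! b) ` (P \<inter> Q)"
proof -
  have "inj_on (\<lambda>b. xs ! b) {..<length xs}" using assms(1) by (simp add: inj_on_nth)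
  then show ?thesis using assms by (metis inj_on_image_Int)
qed

definition sh :: "nat \<Rightarrow> nat \<Rightarrow> nat \<Rightarrow> nat" where
  "sh n s j = (if j + s < n then j + s else j + s - n)"

lemma pos_disj:
  assumes "n = 2*s+1" "j < n"
  shows "pos n s j \<inter> pos n s (sh n s j) = {}"
proof -
  have "a \<notin> pos n s (sh n s j)" if "a \<in> pos n s j" for a
  proof -
    have a: "a < n" using that pos_sub assms by auto
    have "sh n s j < n" using assms unfolding sh_def by auto
    then show ?thesis using that pos_mem[of a n j s] pos_mem[of a n "sh n s j" s] a assms
      unfolding sh_def by (auto split: if_splits)
  qed
  then show ?thesis by auto
qed

lemma cycle_bound:
  assumes d: "distinct xs" and l: "length xs = 2*s+1" and s1: "s \<ge> 1"
    and I: "\<forall>A\<in>S. \<forall>B\<in>S. A \<inter> B \<noteq> {}"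
  defines "J \<equiv> {j. j < 2*s+1 \<and> ival s xs j \<in> S}"
  defines "J' \<equiv> {j. j < 2*s+1 \<and> ival s xs (sh (2*s+1) s j) \<in> S}"
  shows "card J \<le> s" and "J \<inter> J' = {}" and "card J' = card J"
proof -
  let ?n = "2*s+1"
  have shlt: "sh ?n s j < ?n" if "j < ?n" for j using that unfolding sh_def by auto
  have inj: "inj_on (sh ?n s) {..<?n}" unfolding sh_def by (rule inj_onI) (auto split: if_splits)
  have JJ: "J = sh ?n s ` J'"
  proof
    show "sh ?n s ` J' \<subseteq> J" unfolding J_def J'_def using shlt by auto
    show "J \<subseteq> sh ?n s ` J'"
    proof
      fix j assume "j \<in> J"
      then have j: "j < ?n" "ival s xs j \<in> S" unfolding J_def by auto
      define i where "i = (if s \<le> j then j - s else j + ?n - s)"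
      have "i < ?n" "sh ?n s i = j" unfolding i_def sh_def using j by auto
      then show "j \<in> sh ?n s ` J'" unfolding J'_def using j by force
    qed
  qed
  have "J' \<subseteq> {..<?n}" unfolding J'_def by auto
  then show cJ: "card J' = card J" unfolding JJ using inj
    by (metis card_image inj_on_subset)
  show disj: "J \<inter> J' = {}"
  proof (rule ccontr)
    assume "J \<inter> J' \<noteq> {}"
    then obtain j where j: "j < ?n" "ival s xs j \<in> S" "ival s xs (sh ?n s j) \<in> S"
      unfolding J_def J'_def by auto
    have "ival s xs j \<inter> ival s xs (sh ?n s j) = {}"
      unfolding ival_def l using image_nth_inter[OF d, of "pos ?n s j" "pos ?n s (sh ?n s j)"]
        pos_disj[of ?n s j] pos_sub[of ?n s] l j by auto
    then show False using I j by blast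
  qed
  have "J \<union> J' \<subseteq> {..<?n}" unfolding J_def J'_def by auto
  then have "card (J \<union> J') \<le> ?n" by (metis card_lessThan card_mono finite_lessThan)
  moreover have "card (J \<union> J') = card J + card J'"
    using disj \<open>J \<union> J' \<subseteq> {..<?n}\<close> by (metis card_Un_disjoint finite_Un finite_lessThan finite_subset)
  ultimately show "card J \<le> s" using cJ by linarith
qed

lemma arith_pred:
  assumes "x < 2*s+1" shows "sh (2*s+1) s (sh (2*s+1) s x) = (if 1 \<le> x then x - 1 else 2*s)"
  using assms unfolding sh_def by auto

lemma arith_a5: "(j::nat) < 2*s+1 \<Longrightarrow> j0 < 2*s+1 \<Longrightarrow> s \<ge> 1 \<Longrightarrow> 1 \<le> i \<Longrightarrow> i \<le> s \<Longrightarrow> j = (if i \<le> j0 then j0 - i else j0 + (2*s+1) - i) \<Longrightarrow>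
  dd1 = (if 1 \<le> j0 then j0 - 1 else j0 + (2*s+1) - 1) \<Longrightarrow>
   (if j \<le> dd1 then dd1 - j < s else dd1 + (2*s+1) - j < s)"
  by (auto split: if_splits)

lemma arith_a6: "(j::nat) < 2*s+1 \<Longrightarrow> j0 < 2*s+1 \<Longrightarrow> s \<ge> 1 \<Longrightarrow> 
  dd1 = (if 1 \<le> j0 then j0 - 1 else j0 + (2*s+1) - 1) \<Longrightarrow>
   (if j \<le> dd1 then dd1 - j < s else dd1 + (2*s+1) - j < s) \<Longrightarrow>
   i = (if j < j0 then j0 - j else j0 + (2*s+1) - j) \<Longrightarrow>
   1 \<le> i \<and> i \<le> s \<and> j = (if i \<le> j0 then j0 - i else j0 + (2*s+1) - i)"
  by (auto split: if_splits)

lemma cycle_eq: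
  assumes d: "distinct xs" and l: "length xs = 2*s+1" and s1: "s \<ge> 1"
    and I: "\<forall>A\<in>S. \<forall>B\<in>S. A \<inter> B \<noteq> {}"
    and c: "card {j. j < 2*s+1 \<and> ival s xs j \<in> S} = s"
  shows "\<exists>x\<in>set xs. \<forall>j<2*s+1. (ival s xs j \<in> S \<longleftrightarrow> x \<in> ival s xs j)"
proof -
  let ?n = "2*s+1"
  define J where "J \<equiv> {j. j < 2*s+1 \<and> ival s xs j \<in> S}"
  define J' where "J' \<equiv> {j. j < 2*s+1 \<and> ival s xs (sh (2*s+1) s j) \<in> S}"
  note cb = cycle_bound[OF d l s1 I, folded J_def J'_def]
  have shlt: "sh ?n s j < ?n" if "j < ?n" for j using that unfolding sh_def by auto
  have sub: "J \<union> J' \<subseteq> {..<?n}" unfolding J_def J'_def by auto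
  have fin: "finite J" "finite J'" unfolding J_def J'_def by auto
  have cu: "card (J \<union> J') = 2*s" using card_Un_disjoint[OF fin cb(2)] cb(3) c J_def by simp
  have "card ({..<?n} - (J \<union> J')) = 1"
    using card_Diff_subset[OF _ sub] cu fin by simp
  then obtain j0 where j0: "{..<?n} - (J \<union> J') = {j0}" by (meson card_1_singletonE)
  then have j0n: "j0 < ?n" "j0 \<notin> J" "j0 \<notin> J'" by auto
  have other: "j \<in> J \<or> j \<in> J'" if "j < ?n" "j \<noteq> j0" for j using j0 that by auto
  have J'iff: "j \<in> J' \<longleftrightarrow> sh ?n s j \<in> J" if "j < ?n" for j
    unfolding J_def J'_def using that shlt by auto
  define dd where "dd i = (if i \<le> j0 then j0 - i else j0 + ?n - i)" for i
  have ddlt: "dd i < ?n" if "i \<le> ?n" "1 \<le> i" for i using that j0n unfolding dd_def by auto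
  have step: "dd (Suc i) = (if 1 \<le> dd i then dd i - 1 else 2*s)" if "i < s" "1 \<le> i" for i
    using that j0n unfolding dd_def by auto
  have inJ: "dd i \<in> J" if "1 \<le> i" "i \<le> s" for i
    using that
  proof (induction i)
    case 0 then show ?case by simp
  next
    case (Suc i)
    show ?case
    proof (cases "i = 0")
      case True
      have "sh ?n s j0 \<notin> J" using J'iff j0n by auto
      moreover have "sh ?n s j0 \<noteq> j0" using s1 j0n unfolding sh_def by auto
      ultimately have "sh ?n s j0 \<in> J'" using other shlt j0n by blast
      then have "sh ?n s (sh ?n s j0) \<in> J" using J'iff shlt j0n by blast
      then show ?thesis using arith_pred[of j0 s] j0n True unfolding dd_def by (cases j0) auto
    next
      case False
      then have ih: "dd i \<in> J" using Suc by auto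
      have lt: "dd i < ?n" using ddlt False Suc by auto
      have "sh ?n s (dd i) \<notin> J" using J'iff[OF lt] ih cb(2) by auto
      moreover have "sh ?n s (dd i) \<noteq> j0" using False Suc j0n unfolding sh_def dd_def by auto
      ultimately have "sh ?n s (dd i) \<in> J'" using other shlt lt by blast
      then have "sh ?n s (sh ?n s (dd i)) \<in> J" using J'iff shlt lt by blast
      then show ?thesis using arith_pred[OF lt] step[of i] False Suc by auto
    qed
  qed
  have injd: "inj_on dd {1..s}" unfolding dd_def by (rule inj_onI) (auto split: if_splits)
  have DJ: "dd ` {1..s} = J"
  proof (rule card_subset_eq[OF fin(1)])
    show "dd ` {1..s} \<subseteq> J" using inJ by auto
    show "card (dd ` {1..s}) = card J" using card_image[OF injd] c J_def by simp
  qed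
  define x where "x = xs ! dd 1"
  have d1: "dd 1 < ?n" using ddlt s1 by auto
  show ?thesis
  proof (intro bexI allI impI)
    show "x \<in> set xs" unfolding x_def using d1 l by simp
    fix j assume j: "j < ?n"
    have "ival s xs j \<in> S \<longleftrightarrow> j \<in> dd ` {1..s}" using DJ j J_def by auto
    also have "\<dots> \<longleftrightarrow> dd 1 \<in> pos ?n s j"
    proof -
      have "j \<in> dd ` {1..s} \<longleftrightarrow> (\<exists>i. 1 \<le> i \<and> i \<le> s \<and> j = dd i)" by auto
      also have "\<dots> \<longleftrightarrow> (if j \<le> dd 1 then dd 1 - j < s else dd 1 + ?n - j < s)"
      proof
        assume "\<exists>i. 1 \<le> i \<and> i \<le> s \<and> j = dd i"
        then obtain i where "1 \<le> i" "i \<le> s" "j = dd i" by blast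
        then show "(if j \<le> dd 1 then dd 1 - j < s else dd 1 + ?n - j < s)"
          using arith_a5[of j s j0 i "dd 1"] j j0n s1 dd_def[of 1] dd_def[of i] by metis
      next
        assume h: "(if j \<le> dd 1 then dd 1 - j < s else dd 1 + ?n - j < s)"
        define i where "i = (if j < j0 then j0 - j else j0 + ?n - j)"
        have "1 \<le> i \<and> i \<le> s \<and> j = dd i"
          using arith_a6[OF j j0n(1) s1 dd_def[of 1] h i_def] by (simp only: dd_def)
        then show "\<exists>i. 1 \<le> i \<and> i \<le> s \<and> j = dd i" by blast
      qed
      also have "\<dots> \<longleftrightarrow> dd 1 \<in> pos ?n s j" using pos_mem[of "dd 1" ?n j s] d1 j by auto
      finally show ?thesis .
    qed
    also have "\<dots> \<longleftrightarrow> x \<in> ival s xs j"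
      unfolding x_def ival_def l using nth_in_image_distinct[OF d, of "dd 1" "pos ?n s j"] d1 l pos_sub[of ?n s]
      by auto
    finally show "ival s xs j \<in> S \<longleftrightarrow> x \<in> ival s xs j" .
  qed
qed

lemma exists_perm_map:
  assumes "finite X" "S \<subseteq> X" "T \<subseteq> X" "card S = card T"
  shows "\<exists>\<sigma>. bij_betw \<sigma> X X \<and> \<sigma> ` S = T"
proof -
  obtain f where f: "bij_betw f S T" using finite_same_card_bij assms
    by (metis finite_subset)
  have "card (X - S) = card (X - T)" using assms by (simp add: card_Diff_subset finite_subset)
  then obtain g where g: "bij_betw g (X - S) (X - T)" using finite_same_card_bij assms
    by (metis finite_Diff)
  define \<sigma> where "\<sigma> x = (if x \<in> S then f x else g x)" for x
  have f': "bij_betw \<sigma> S T" using f unfolding \<sigma>_def by (rule bij_betw_cong[THEN iffD1, rotated]) auto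
  have g': "bij_betw \<sigma> (X - S) (X - T)" using g unfolding \<sigma>_def
    by (rule bij_betw_cong[THEN iffD1, rotated]) auto
  have "bij_betw \<sigma> (S \<union> (X - S)) (T \<union> (X - T))" by (rule bij_betw_combine[OF f' g']) auto
  moreover have "S \<union> (X - S) = X" "T \<union> (X - T) = X" using assms by auto
  ultimately show ?thesis using f' bij_betw_imp_surj_on by metis
qed

lemma ival_map:
  assumes "0 < length xs" "j < length xs"
  shows "ival s (map \<sigma> xs) j = \<sigma> ` ival s xs j"
proof -
  have "pos (length xs) s j \<subseteq> {..<length xs}" using pos_sub assms by auto
  then show ?thesis unfolding ival_def by (force simp: image_image)
qed

definition Qset :: "'a set \<Rightarrow> nat \<Rightarrow> 'a set \<Rightarrow> ('a list \<times> nat) set" where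
  "Qset X s S = {(xs, j). xs \<in> permutations_of_set X \<and> j < card X \<and> ival s xs j = S}"

lemma finite_Qset: "finite X \<Longrightarrow> finite (Qset X s S)"
  by (rule finite_subset[of _ "permutations_of_set X \<times> {..<card X}"]) (auto simp: Qset_def)

lemma Qset_le:
  assumes X: "finite X" "0 < card X" and ST: "S \<subseteq> X" "T \<subseteq> X" "card S = card T"
  shows "card (Qset X s S) \<le> card (Qset X s T)"
proof -
  obtain \<sigma> where \<sigma>: "bij_betw \<sigma> X X" "\<sigma> ` S = T" using exists_perm_map[OF X(1) ST] by blast
  have inj\<sigma>: "inj_on \<sigma> X" using \<sigma> bij_betw_def by blast
  let ?f = "\<lambda>(xs, j). (map \<sigma> xs, j)"
  have "?f ` Qset X s S \<subseteq> Qset X s T"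
  proof
    fix y assume "y \<in> ?f ` Qset X s S"
    then obtain xs j where y: "y = (map \<sigma> xs, j)" "xs \<in> permutations_of_set X" "j < card X" "ival s xs j = S"
      unfolding Qset_def by auto
    have sx: "set xs = X" "distinct xs" using y(2) permutations_of_setD by auto
    have l: "length xs = card X" using y(2) length_finite_permutations_of_set by auto
    have "map \<sigma> xs \<in> permutations_of_set X"
      using sx \<sigma> inj\<sigma> by (auto simp: permutations_of_set_def distinct_map bij_betw_def)
    moreover have "ival s (map \<sigma> xs) j = T" using ival_map[of xs j s \<sigma>] l X y \<sigma> by auto
    ultimately show "y \<in> Qset X s T" using y X unfolding Qset_def by auto
  qed
  moreover have "inj_on ?f (Qset X s S)"
  proof (rule inj_onI)
    fix a b assume ab: "a \<in> Qset X s S" "b \<in> Qset X s S" "?f a = ?f b"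
    obtain xs j where a: "a = (xs, j)" "set xs = X" using ab(1) unfolding Qset_def permutations_of_set_def by auto
    obtain ys i where b: "b = (ys, i)" "set ys = X" using ab(2) unfolding Qset_def permutations_of_set_def by auto
    have "map \<sigma> xs = map \<sigma> ys" "j = i" using ab(3) a b by auto
    then have "xs = ys" using inj\<sigma> a b by (metis inj_on_map_eq_map order_refl sup.absorb_iff1 set_append inj_on_subset)
    then show "a = b" using a b \<open>j = i\<close> by simp
  qed
  ultimately show ?thesis using card_inj_on_le finite_Qset X(1) by metis
qed

lemma Qset_eq:
  assumes "finite X" "0 < card X" "S \<subseteq> X" "T \<subseteq> X" "card S = card T"
  shows "card (Qset X s S) = card (Qset X s T)"
  by (intro antisym Qset_le) (use assms in auto)

lemma double_count:
  assumes X: "finite X" and F: "F \<subseteq> Pow X"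
  shows "(\<Sum>xs\<in>permutations_of_set X. card {j. j < card X \<and> ival s xs j \<in> F})
       = (\<Sum>S\<in>F. card (Qset X s S))"
proof -
  let ?A = "{(xs, j). xs \<in> permutations_of_set X \<and> j < card X \<and> ival s xs j \<in> F}"
  have "?A = (SIGMA xs:permutations_of_set X. {j. j < card X \<and> ival s xs j \<in> F})" by auto
  then have 1: "card ?A = (\<Sum>xs\<in>permutations_of_set X. card {j. j < card X \<and> ival s xs j \<in> F})"
    by simp
  have finF: "finite F" using F X by (meson finite_Pow_iff finite_subset)
  have "?A = (\<Union>S\<in>F. Qset X s S)" unfolding Qset_def by auto
  moreover have "card (\<Union>S\<in>F. Qset X s S) = (\<Sum>S\<in>F. card (Qset X s S))"
    by (rule card_UN_disjoint[OF finF]) (use finite_Qset[OF X] in \<open>auto simp: Qset_def\<close>)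
  ultimately have "card ?A = (\<Sum>S\<in>F. card (Qset X s S))" by simp
  then show ?thesis using 1 by simp
qed

lemma ival_props:
  assumes "xs \<in> permutations_of_set X" "finite X" "s \<le> card X" "j < card X"
  shows "ival s xs j \<subseteq> X" "card (ival s xs j) = s"
proof -
  have sx: "set xs = X" "distinct xs" using assms(1) permutations_of_setD by auto
  have l: "length xs = card X" using assms(1) length_finite_permutations_of_set by auto
  have ps: "pos (card X) s j \<subseteq> {..<card X}" using pos_sub assms(4) by auto
  then show "ival s xs j \<subseteq> X" unfolding ival_def l using sx l by auto
  have "inj_on (\<lambda>a. xs ! a) (pos (card X) s j)"
    using inj_on_nth[OF sx(2), of "pos (card X) s j"] ps l by auto
  then show "card (ival s xs j) = s" unfolding ival_def l
    using card_image card_pos[OF assms(3,4)] by metis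
qed

lemma binom_id: "s \<ge> 1 \<Longrightarrow> s * ((2*s+1) choose s) = (2*s+1) * ((2*s) choose (s-1))"
  using binomial_absorption[of "s-1" "2*s+1"] by simp


theorem ekr_katona:
  assumes X: "finite X" "card X = 2*s+1" and s1: "s \<ge> 1"
    and F: "F \<subseteq> {S. S \<subseteq> X \<and> card S = s}" and I: "\<forall>A\<in>F. \<forall>B\<in>F. A \<inter> B \<noteq> {}"
  shows "card F \<le> (2*s) choose (s-1)"
    and "card F = (2*s) choose (s-1) \<Longrightarrow> \<forall>xs\<in>permutations_of_set X. \<exists>x\<in>X.
            \<forall>j<2*s+1. (ival s xs j \<in> F \<longleftrightarrow> x \<in> ival s xs j)"
proof -
  let ?n = "2*s+1"
  let ?P = "permutations_of_set X"
  let ?K = "{S. S \<subseteq> X \<and> card S = s}"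
  let ?J = "\<lambda>xs. card {j. j < card X \<and> ival s xs j \<in> F}"
  obtain S0 where S0: "S0 \<subseteq> X" "card S0 = s" using obtain_subset_with_card_n[of s X] X by auto
  define c where "c = card (Qset X s S0)"
  have X0: "0 < card X" using X by simp
  have hQ: "card (Qset X s S) = c" if "S \<in> ?K" for S
  proof -
    have "S \<subseteq> X" "card S = card S0" using that S0 by auto
    then show ?thesis using Qset_eq[OF X(1) X0 _ S0(1)] unfolding c_def by blast
  qed
  have hK: "card ?K = ?n choose s" using n_subsets[OF X(1), of s] X(2) by simp
  have finK: "finite ?K" by (rule finite_subset[of _ "Pow X"]) (use X in auto)
  have "(\<Sum>xs\<in>?P. card {j. j < card X \<and> ival s xs j \<in> ?K}) = (\<Sum>S\<in>?K. card (Qset X s S))"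
    by (rule double_count[OF X(1)]) auto
  also have "\<dots> = card ?K * c" using hQ by simp
  finally have e1: "(\<Sum>xs\<in>?P. card {j. j < card X \<and> ival s xs j \<in> ?K}) = card ?K * c" .
  have "{j. j < card X \<and> ival s xs j \<in> ?K} = {..<card X}" if "xs \<in> ?P" for xs
  proof -
    have "s \<le> card X" using X(2) by simp
    then show ?thesis using ival_props[OF that X(1)] by auto
  qed
  then have "(\<Sum>xs\<in>?P. card {j. j < card X \<and> ival s xs j \<in> ?K}) = card ?P * card X"
    by simp
  with e1 have dcK: "card ?P * ?n = card ?K * c" using X(2) by simp
  have dcF: "(\<Sum>xs\<in>?P. ?J xs) = card F * c"
  proof -
    have "(\<Sum>xs\<in>?P. ?J xs) = (\<Sum>S\<in>F. card (Qset X s S))"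
      by (rule double_count[OF X(1)]) (use F in auto)
    also have "\<dots> = (\<Sum>S\<in>F. c)" using hQ F by (intro sum.cong) auto
    finally show ?thesis by simp
  qed
  have Jle: "?J xs \<le> s" if "xs \<in> ?P" for xs
  proof -
    have "distinct xs" "length xs = 2*s+1" using that permutations_of_setD(2) length_finite_permutations_of_set[OF that] X(2) by auto
    then show ?thesis using cycle_bound(1)[OF _ _ s1 I] X(2) by simp
  qed
  have sumle: "(\<Sum>xs\<in>?P. ?J xs) \<le> card ?P * s"
    using sum_mono[of ?P ?J "\<lambda>_. s"] Jle by simp
  have P0: "0 < card ?P" using card_permutations_of_set[OF X(1)] by simp
  have c0: "0 < c"
  proof (rule ccontr)
    assume "\<not> 0 < c" then have "c = 0" by simp
    then show False using dcK P0 X(1) by simp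
  qed
  have "card F * c \<le> card ?P * s" using sumle dcF by simp
  then have "card F * c * ?n \<le> card ?P * s * ?n" by (rule mult_right_mono) simp
  also have "\<dots> = s * (card ?P * ?n)" by (simp only: mult_ac)
  also have "\<dots> = s * card ?K * c" unfolding dcK by (simp only: mult_ac)
  finally have "(card F * ?n) * c \<le> (s * card ?K) * c" by (simp add: algebra_simps)
  then have key: "card F * ?n \<le> s * card ?K" using c0 by simp
  have bi: "s * card ?K = ?n * ((2*s) choose (s-1))" using hK binom_id[OF s1] by simp
  have "?n * card F \<le> ?n * ((2*s) choose (s-1))" using key bi by (metis mult.commute)
  then show "card F \<le> (2*s) choose (s-1)" by (rule mult_le_cancel1[THEN iffD1, rule_format]) simp
  assume eq: "card F = (2*s) choose (s-1)"
  have "card F * ?n = s * card ?K" using eq bi by (simp add: mult.commute)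
  then have "(card F * ?n) * c = (s * card ?K) * c" by simp
  also have "\<dots> = s * (card ?P * ?n)" unfolding dcK by (simp only: mult_ac)
  finally have "(card F * c) * ?n = (card ?P * s) * ?n" by (simp only: mult_ac)
  then have "card F * c = card ?P * s" by (rule mult_right_cancel[THEN iffD1, rotated]) simp
  then have sumeq: "(\<Sum>xs\<in>?P. ?J xs) = card ?P * s" using dcF by simp
  show "\<forall>xs\<in>?P. \<exists>x\<in>X. \<forall>j<2*s+1. (ival s xs j \<in> F \<longleftrightarrow> x \<in> ival s xs j)"
  proof
    fix xs assume xs: "xs \<in> ?P"
    have "?J xs = s"
    proof (rule ccontr)
      assume "?J xs \<noteq> s"
      then have "?J xs < s" using Jle xs by force
      then have "(\<Sum>xs\<in>?P. ?J xs) < (\<Sum>xs\<in>?P. s)"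
        using sum_strict_mono_ex1[of ?P ?J "\<lambda>_. s"] Jle xs by auto
      then show False using sumeq by simp
    qed
    moreover have "distinct xs" "length xs = 2*s+1" "set xs = X"
      using permutations_of_setD[OF xs] length_finite_permutations_of_set[OF xs] X(2) by auto
    ultimately show "\<exists>x\<in>X. \<forall>j<2*s+1. (ival s xs j \<in> F \<longleftrightarrow> x \<in> ival s xs j)"
      using cycle_eq[OF _ _ s1 I] X(2) by auto
  qed
qed

definition good :: "'a set set \<Rightarrow> nat \<Rightarrow> 'a list \<Rightarrow> 'a \<Rightarrow> bool" where
  "good F s xs x \<longleftrightarrow> (\<forall>j<length xs. (ival s xs j \<in> F \<longleftrightarrow> x \<in> ival s xs j))"

lemma ival_rotate:
  assumes "0 < length xs" "j < length xs"
  shows "ival s (rotate r xs) j = ival s xs ((r + j) mod length xs)"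
proof -
  let ?n = "length xs"
  have "ival s (rotate r xs) j = (\<lambda>a. xs ! ((r + a) mod ?n)) ` pos ?n s j"
    unfolding ival_def length_rotate using pos_sub[of ?n s j] assms
    by (intro image_cong refl) (auto simp: nth_rotate)
  also have "\<dots> = (\<lambda>i. xs ! ((r + (j + i) mod ?n) mod ?n)) ` {..<s}"
    unfolding pos_def by (simp add: image_image)
  also have "\<dots> = (\<lambda>i. xs ! (((r + j) mod ?n + i) mod ?n)) ` {..<s}"
    by (intro image_cong refl) (simp add: mod_simps add.assoc)
  also have "\<dots> = ival s xs ((r + j) mod ?n)"
    unfolding ival_def pos_def by (simp add: image_image)
  finally show ?thesis .
qed

lemma good_rotate:
  assumes "0 < length xs" "good F s xs x"
  shows "good F s (rotate r xs) x"
  unfolding good_def length_rotate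
proof (intro allI impI)
  fix j assume j: "j < length xs"
  have "(r + j) mod length xs < length xs" using assms by simp
  then show "ival s (rotate r xs) j \<in> F \<longleftrightarrow> x \<in> ival s (rotate r xs) j"
    using assms(2) unfolding good_def ival_rotate[OF assms(1) j] by blast
qed

definition swp :: "nat \<Rightarrow> 'a list \<Rightarrow> 'a list" where
  "swp p xs = xs[p := xs ! Suc p, Suc p := xs ! p]"

lemma swp_nth:
  assumes "Suc p < length xs" "a < length xs"
  shows "swp p xs ! a = (if a = p then xs ! Suc p else if a = Suc p then xs ! p else xs ! a)"
  using assms unfolding swp_def by (auto simp: nth_list_update)

lemma swp_length[simp]: "length (swp p xs) = length xs"
  unfolding swp_def by simp

lemma swp_perm:
  assumes "xs \<in> permutations_of_set X" "Suc p < length xs"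
  shows "swp p xs \<in> permutations_of_set X"
proof -
  have d: "distinct xs" "set xs = X" using permutations_of_setD assms by auto
  have "distinct (swp p xs)" "set (swp p xs) = X"
    using d assms(2) unfolding swp_def by (auto simp: distinct_list_update set_swap)
  then show ?thesis by auto
qed

lemma swp_append: "swp (length u) (u @ c # b # v) = u @ b # c # v"
  unfolding swp_def by (simp add: list_update_append nth_append)

lemma ival_swp_unchanged:
  assumes "Suc p < length xs" "j < length xs"
    and eq: "p \<in> pos (length xs) s j \<longleftrightarrow> Suc p \<in> pos (length xs) s j"
  shows "ival s (swp p xs) j = ival s xs j"
proof -
  let ?P = "pos (length xs) s j"
  have ps: "?P \<subseteq> {..<length xs}" using pos_sub[of "length xs" s j] assms(2) by (cases xs) auto
  show ?thesis unfolding ival_def swp_length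
  proof (intro equalityI subsetI)
    fix y assume "y \<in> (\<lambda>a. swp p xs ! a) ` ?P"
    then obtain a where a: "a \<in> ?P" "y = swp p xs ! a" by auto
    have "a < length xs" using a ps by auto
    then show "y \<in> (\<lambda>a. xs ! a) ` ?P" using a eq swp_nth[OF assms(1)] by (auto split: if_splits)
  next
    fix y assume "y \<in> (\<lambda>a. xs ! a) ` ?P"
    then obtain a where a: "a \<in> ?P" "y = xs ! a" by auto
    have al: "a < length xs" using a ps by auto
    show "y \<in> (\<lambda>a. swp p xs ! a) ` ?P"
    proof (cases "a = p \<or> a = Suc p")
      case True
      then show ?thesis
      proof
        assume "a = p"
        then have "swp p xs ! Suc p = y" "Suc p \<in> ?P" using swp_nth[OF assms(1) assms(1)] a eq by auto
        then show ?thesis by force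
      next
        assume "a = Suc p"
        then have "swp p xs ! p = y" "p \<in> ?P" using swp_nth[OF assms(1), of p] assms(1) a eq by auto
        then show ?thesis by force
      qed
    next
      case False
      then have "swp p xs ! a = y" using swp_nth[OF assms(1) al] a by auto
      then show ?thesis using a by force
    qed
  qed
qed


lemma separator:
  assumes s1: "s \<ge> 1" and n: "n = 2*s+1" and r: "1 \<le> r" "r < n" and p: "1 \<le> p" "Suc p < n"
  shows "\<exists>j<n. (0 \<in> pos n s j \<longleftrightarrow> r \<notin> pos n s j) \<and> (p \<in> pos n s j \<longleftrightarrow> Suc p \<in> pos n s j)"
proof -
  have sn: "s < n" using n by simp
  have M: "a \<in> pos n s j \<longleftrightarrow> (if j \<le> a then a - j < s else a + n - j < s)" if "a < n" "j < n" for a j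
    using pos_mem[OF that sn] .
  have T: "\<exists>j<n. (0 \<in> pos n s j \<longleftrightarrow> r \<notin> pos n s j) \<and> (p \<in> pos n s j \<longleftrightarrow> Suc p \<in> pos n s j)"
    if "j < n" "(if j \<le> 0 then 0 - j < s else 0 + n - j < s) \<longleftrightarrow> \<not> (if j \<le> r then r - j < s else r + n - j < s)"
      "(if j \<le> p then p - j < s else p + n - j < s) \<longleftrightarrow> (if j \<le> Suc p then Suc p - j < s else Suc p + n - j < s)" for j
    using that M[of 0 j] M[of r j] M[of p j] M[of "Suc p" j] r p n by auto
  show ?thesis
  proof (cases "r \<le> s")
    case True
    show ?thesis
    proof (cases "p = s")
      case False
      show ?thesis by (rule T[of 1]) (use True False r p n s1 in auto)
    next
      case ps: True
      show ?thesis
      proof (cases "2 \<le> s")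
        case True
        show ?thesis by (rule T[of "s+2"]) (use True ps \<open>r \<le> s\<close> r p n s1 in auto)
      next
        case False
        show ?thesis by (rule T[of 0]) (use False ps \<open>r \<le> s\<close> r p n s1 in auto)
      qed
    qed
  next
    case False
    show ?thesis
    proof (cases "p = s")
      case ps: False
      show ?thesis by (rule T[of "s+1"]) (use False ps r p n s1 in auto)
    next
      case ps: True
      show ?thesis by (rule T[of 0]) (use False ps r p n s1 in auto)
    qed
  qed
qed

lemma good_swp:
  assumes xs: "distinct xs" "length xs = 2*s+1" and s1: "s \<ge> 1"
    and x: "xs ! 0 = x" and g: "good F s xs x" and p: "1 \<le> p" "Suc p < length xs"
    and y: "y \<in> set xs" "good F s (swp p xs) y"
  shows "good F s (swp p xs) x"
proof (cases "y = x")
  case True then show ?thesis using y by simp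
next
  case False
  let ?n = "length xs"
  obtain r where r: "r < ?n" "xs ! r = y" using y(1) by (metis in_set_conv_nth)
  have r1: "1 \<le> r" using r x False by (cases r) auto
  obtain j where j: "j < ?n" "(0 \<in> pos ?n s j \<longleftrightarrow> r \<notin> pos ?n s j)" "(p \<in> pos ?n s j \<longleftrightarrow> Suc p \<in> pos ?n s j)"
    using separator[OF s1 xs(2) r1 _ p] r by auto
  have un: "ival s (swp p xs) j = ival s xs j" using ival_swp_unchanged[OF p(2) j(1) j(3)] .
  have ps: "pos ?n s j \<subseteq> {..<?n}" using pos_sub[of ?n s j] j(1) by (cases xs) auto
  have 0: "x \<in> ival s xs j \<longleftrightarrow> 0 \<in> pos ?n s j"
    unfolding ival_def using nth_in_image_distinct[OF xs(1) _ ps, of 0] x xs(2) by auto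
  have R: "y \<in> ival s xs j \<longleftrightarrow> r \<in> pos ?n s j"
    unfolding ival_def using nth_in_image_distinct[OF xs(1) r(1) ps] r by auto
  have "ival s xs j \<in> F \<longleftrightarrow> x \<in> ival s xs j" using g j(1) unfolding good_def by auto
  moreover have "ival s xs j \<in> F \<longleftrightarrow> y \<in> ival s xs j" using y(2) j(1) un unfolding good_def by auto
  ultimately show ?thesis using 0 R j(2) by blast
qed

lemma move_front:
  assumes cl: "\<And>l p. Q l \<Longrightarrow> length pre \<le> p \<Longrightarrow> Suc p < length l \<Longrightarrow> Q (swp p l)"
  shows "Q (pre @ a1 @ b # a2) \<Longrightarrow> Q (pre @ b # a1 @ a2)"
proof (induction a1 arbitrary: a2 rule: rev_induct)
  case Nil then show ?case by simp
next
  case (snoc c a1)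
  have "swp (length (pre @ a1)) ((pre @ a1) @ c # b # a2) = (pre @ a1) @ b # c # a2" by (rule swp_append)
  moreover have "Q (swp (length (pre @ a1)) ((pre @ a1) @ c # b # a2))"
    by (rule cl) (use snoc.prems in auto)
  ultimately have "Q (pre @ a1 @ b # c # a2)" by simp
  then have "Q (pre @ b # a1 @ c # a2)" using snoc.IH by simp
  then show ?case by simp
qed

lemma perm_closure:
  assumes cl: "\<And>l p. Q l \<Longrightarrow> k \<le> p \<Longrightarrow> Suc p < length l \<Longrightarrow> Q (swp p l)"
  shows "k \<le> length pre \<Longrightarrow> Q (pre @ as) \<Longrightarrow> mset as = mset bs \<Longrightarrow> Q (pre @ bs)"
proof (induction bs arbitrary: pre as)
  case Nil then show ?case by simp
next
  case (Cons b bs)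
  have "b \<in> set as" using Cons.prems(3) by (metis list.set_intros(1) set_mset_mset)
  then obtain a1 a2 where as: "as = a1 @ b # a2" by (meson split_list)
  have cl': "\<And>l p. Q l \<Longrightarrow> length pre \<le> p \<Longrightarrow> Suc p < length l \<Longrightarrow> Q (swp p l)"
    using cl Cons.prems(1) by auto
  have "Q (pre @ b # a1 @ a2)" using move_front[where Q=Q and pre=pre, OF cl'] Cons.prems(2) as by blast
  then have "Q ((pre @ [b]) @ (a1 @ a2))" by simp
  moreover have "mset (a1 @ a2) = mset bs" using Cons.prems(3) as by simp
  ultimately have "Q ((pre @ [b]) @ bs)" using Cons.IH[of "pre @ [b]" "a1 @ a2"] Cons.prems(1) by simp
  then show ?case by simp
qed

lemma card_star:
  assumes "finite X" "t \<in> X" "s \<ge> 1"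
  shows "card {S. S \<subseteq> X \<and> card S = s \<and> t \<in> S} = (card X - 1) choose (s - 1)"
proof -
  let ?T = "{T. T \<subseteq> X - {t} \<and> card T = s - 1}"
  have "{S. S \<subseteq> X \<and> card S = s \<and> t \<in> S} = insert t ` ?T"
  proof (intro equalityI subsetI)
    fix S assume S: "S \<in> {S. S \<subseteq> X \<and> card S = s \<and> t \<in> S}"
    then have "S - {t} \<in> ?T" "S = insert t (S - {t})" using assms by (auto simp: finite_subset)
    then show "S \<in> insert t ` ?T" by blast
  next
    fix S assume "S \<in> insert t ` ?T"
    then obtain T where T: "T \<subseteq> X - {t}" "card T = s - 1" "S = insert t T" by auto
    have "finite T" using T assms finite_subset by blast
    have "t \<notin> T" using T by auto
    then have "card S = s" using T assms \<open>finite T\<close> by (simp add: card_insert_disjoint)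
    then show "S \<in> {S. S \<subseteq> X \<and> card S = s \<and> t \<in> S}" using T assms by auto
  qed
  moreover have "inj_on (insert t) ?T" by (rule inj_onI) auto
  ultimately have "card {S. S \<subseteq> X \<and> card S = s \<and> t \<in> S} = card ?T" by (simp add: card_image)
  also have "\<dots> = card (X - {t}) choose (s - 1)" using n_subsets[of "X - {t}" "s-1"] assms by simp
  finally show ?thesis using assms by simp
qed

lemma card_nonstar:
  assumes "finite X" "t \<in> X"
  shows "card {S. S \<subseteq> X \<and> card S = s \<and> t \<notin> S} = (card X - 1) choose s"
proof -
  have "{S. S \<subseteq> X \<and> card S = s \<and> t \<notin> S} = {S. S \<subseteq> X - {t} \<and> card S = s}" by auto
  then show ?thesis using n_subsets[of "X - {t}" s] assms by simp
qed

theorem ekr_unique: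
  assumes X: "finite X" "card X = 2*s+1" and s1: "s \<ge> 1"
    and F: "F \<subseteq> {S. S \<subseteq> X \<and> card S = s}" and I: "\<forall>A\<in>F. \<forall>B\<in>F. A \<inter> B \<noteq> {}"
    and eq: "card F = (2*s) choose (s-1)"
  shows "\<exists>t\<in>X. F = {S. S \<subseteq> X \<and> card S = s \<and> t \<in> S}"
proof -
  let ?P = "permutations_of_set X"
  have st: "\<forall>xs\<in>?P. \<exists>x\<in>X. \<forall>j<2*s+1. (ival s xs j \<in> F \<longleftrightarrow> x \<in> ival s xs j)"
    using ekr_katona(2)[OF X s1 F I eq] .
  have stg: "\<exists>x\<in>X. good F s xs x" if "xs \<in> ?P" for xs
    using st that length_finite_permutations_of_set[OF that] X(2) unfolding good_def by simp
  obtain xs0 where xs0: "xs0 \<in> ?P" using X(1) permutations_of_set_empty_iff by blast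
  obtain x where x: "x \<in> X" "good F s xs0 x" using stg[OF xs0] by blast
  have d0: "distinct xs0" "set xs0 = X" "length xs0 = 2*s+1"
    using permutations_of_setD[OF xs0] length_finite_permutations_of_set[OF xs0] X(2) by auto
  obtain i0 where i0: "i0 < length xs0" "xs0 ! i0 = x" using d0(2) x(1) by (metis in_set_conv_nth)
  define xs1 where "xs1 = rotate i0 xs0"
  have xs1P: "xs1 \<in> ?P" using d0 unfolding xs1_def by auto
  have g1: "good F s xs1 x" unfolding xs1_def by (rule good_rotate) (use d0 x in auto)
  have h1: "xs1 ! 0 = x" unfolding xs1_def using nth_rotate[of 0 xs0 i0] i0 d0 by simp
  obtain as where as: "xs1 = x # as" using h1 d0 xs1P
    by (metis length_rotate list.exhaust list.size(3) nth_Cons_0 xs1_def add_is_0 zero_neq_one)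
  define Q where "Q l \<longleftrightarrow> l \<in> ?P \<and> l ! 0 = x \<and> good F s l x" for l
  have cl: "Q (swp p l)" if "Q l" "1 \<le> p" "Suc p < length l" for l p
  proof -
    have lP: "l \<in> ?P" "l ! 0 = x" "good F s l x" using that Q_def by auto
    have dl: "distinct l" "length l = 2*s+1" "set l = X"
      using permutations_of_setD[OF lP(1)] length_finite_permutations_of_set[OF lP(1)] X(2) by auto
    have sP: "swp p l \<in> ?P" using swp_perm lP that by blast
    obtain y where y: "y \<in> X" "good F s (swp p l) y" using stg[OF sP] by blast
    have "good F s (swp p l) x" using good_swp[OF dl(1,2) s1 lP(2,3) that(2,3)] y dl by auto
    moreover have "swp p l ! 0 = x" using swp_nth[OF that(3), of 0] that(2,3) lP(2) by (cases l) auto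
    ultimately show ?thesis using sP Q_def by auto
  qed
  have star: "S \<in> F" if S: "S \<subseteq> X" "card S = s" "x \<in> S" for S
  proof -
    have finS: "finite S" using S X finite_subset by blast
    obtain ys where ys0: "set ys = S - {x}" "distinct ys" using finite_distinct_list[of "S - {x}"] finS by auto
    obtain zs where zs0: "set zs = X - S" "distinct zs" using finite_distinct_list[of "X - S"] X(1) by auto
    have "length ys = card (S - {x})" using ys0 distinct_card by metis
    then have ys: "distinct ys" "set ys = S - {x}" "length ys = s - 1" using ys0 S finS by auto
    have zs: "distinct zs" "set zs = X - S" using zs0 by auto
    have das: "distinct as" "set as = X - {x}" using xs1P as permutations_of_setD by fastforce+
    have "mset as = mset (ys @ zs)"
      by (rule set_eq_iff_mset_eq_distinct[THEN iffD1]) (use das ys zs S in auto)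
    then have "Q ([x] @ (ys @ zs))" using perm_closure[of Q 1, OF cl, of "[x]" as "ys @ zs"] g1 h1 xs1P as
      unfolding Q_def by auto
    then have gl: "good F s (x # ys @ zs) x" unfolding Q_def by simp
    have len: "length (x # ys @ zs) = 2*s+1"
    proof -
      have "x # ys @ zs \<in> ?P" using \<open>Q ([x] @ (ys @ zs))\<close> unfolding Q_def by simp
      from length_finite_permutations_of_set[OF this] show ?thesis using X(2) by simp
    qed
    have "pos (2*s+1) s 0 = {0..<s}" unfolding pos_def by (auto simp: image_iff)
    then have "ival s (x # ys @ zs) 0 = set (take s (x # ys @ zs))"
      unfolding ival_def len using nth_image[of s "x # ys @ zs"] len by simp
    also have "\<dots> = insert x (set ys)" using ys(3) s1 by (cases s) auto
    also have "\<dots> = S" using ys(2) S(3) by auto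
    finally have "ival s (x # ys @ zs) 0 = S" .
    then show ?thesis using gl S(3) len unfolding good_def by auto
  qed
  have "{S. S \<subseteq> X \<and> card S = s \<and> x \<in> S} = F"
  proof (rule card_subset_eq)
    show "finite F" by (rule finite_subset[OF F]) (rule finite_subset[of _ "Pow X"], auto simp: X(1))
    show "{S. S \<subseteq> X \<and> card S = s \<and> x \<in> S} \<subseteq> F" using star by auto
    show "card {S. S \<subseteq> X \<and> card S = s \<and> x \<in> S} = card F"
      using card_star[OF X(1) x(1) s1] eq X(2) by simp
  qed
  then show ?thesis using x by blast
qed

definition EE :: "nat \<Rightarrow> nat \<Rightarrow> nat set set \<Rightarrow> nat set \<Rightarrow> nat set set" where
  "EE m n F S = {e. e \<subseteq> {n+1..m} \<and> card e = 2 \<and> S \<union> e \<in> F}"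

definition ZZ :: "nat \<Rightarrow> nat \<Rightarrow> nat set set \<Rightarrow> nat set \<Rightarrow> nat set" where
  "ZZ m n F S = {y \<in> {n+1..m}. insert y ({1..n} - S) \<in> F}"

definition ww :: "nat \<Rightarrow> nat \<Rightarrow> nat set set \<Rightarrow> nat set \<Rightarrow> nat" where
  "ww m n F S = card (EE m n F S) + card (ZZ m n F S)"

lemma disj_by_card:
  assumes "finite U" "A \<subseteq> U" "B \<subseteq> U" "card A + card B > card U"
  shows "A \<inter> B \<noteq> {}"
proof
  assume "A \<inter> B = {}"
  then have "card (A \<union> B) = card A + card B" using assms by (meson card_Un_disjoint finite_subset)
  moreover have "card (A \<union> B) \<le> card U" using assms by (simp add: card_mono)
  ultimately show False using assms by simp
qed

lemma split_card:
  assumes "G \<subseteq> {1..m}" "(n::nat) < m"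
  shows "G = (G \<inter> {1..n}) \<union> (G \<inter> {n+1..m})" "(G \<inter> {1..n}) \<inter> (G \<inter> {n+1..m}) = {}"
    "card G = card (G \<inter> {1..n}) + card (G \<inter> {n+1..m})"
proof -
  show g: "G = (G \<inter> {1..n}) \<union> (G \<inter> {n+1..m})"
  proof (intro equalityI subsetI)
    fix x assume x: "x \<in> G"
    then have "1 \<le> x" "x \<le> m" using assms by auto
    then show "x \<in> (G \<inter> {1..n}) \<union> (G \<inter> {n+1..m})" using x by auto
  qed auto
  show d: "(G \<inter> {1..n}) \<inter> (G \<inter> {n+1..m}) = {}" by auto
  show "card G = card (G \<inter> {1..n}) + card (G \<inter> {n+1..m})"
    by (subst g, rule card_Un_disjoint) (use d in auto)
qed

locale LS =
  fixes k m n :: nat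
  assumes k3: "k \<ge> 3" and mk: "m > 2*k" and nk: "n = 2*k - 3"
begin

lemma basics: "n = 2*(k-2)+1" "k - 2 \<ge> 1" "n < m" "m - n \<ge> 4" "card {1..n} = n" "card {n+1..m} = m - n"
  "k = (k-2) + 2" "finite {1..n}" "finite {n+1..m}"
proof -
  show "n = 2*(k-2)+1" using k3 nk by linarith
  show "k - 2 \<ge> 1" using k3 by linarith
  show "n < m" using k3 nk mk by linarith
  show "m - n \<ge> 4" using k3 nk mk by linarith
  show "card {1..n} = n" by simp
  show "card {n+1..m} = m - n" by simp
  show "k = (k-2) + 2" using k3 by linarith
  show "finite {1..n}" "finite {n+1..m}" by simp_all
qed

lemma member_Y:
  assumes F: "mnk_intersecting m n k F" and G: "G \<in> F"
  shows "G \<subseteq> {1..m}" "card G = k" "card (G \<inter> {n+1..m}) \<le> 2"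
proof -
  have Fs: "F \<subseteq> ksubsets {1..m} k" "ksubsets {1..n} k \<subseteq> F" "intersecting F"
    using F unfolding mnk_intersecting_def by auto
  show Gm: "G \<subseteq> {1..m}" "card G = k" using Fs G unfolding ksubsets_def by auto
  show "card (G \<inter> {n+1..m}) \<le> 2"
  proof (rule ccontr)
    assume "\<not> ?thesis"
    then have c3: "card (G \<inter> {n+1..m}) \<ge> 3" by simp
    have sc: "card G = card (G \<inter> {1..n}) + card (G \<inter> {n+1..m})" using split_card[OF Gm(1) basics(3)] by simp
    have "{1..n} - G = {1..n} - (G \<inter> {1..n})" by auto
    then have "card ({1..n} - G) = n - card (G \<inter> {1..n})"
      by (simp add: card_Diff_subset)
    then have "card ({1..n} - G) \<ge> k" using sc c3 Gm(2) nk k3 by linarith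
    then obtain K where K: "K \<subseteq> {1..n} - G" "card K = k"
      by (meson obtain_subset_with_card_n)
    then have "K \<in> F" using Fs(2) unfolding ksubsets_def by auto
    moreover have "K \<inter> G = {}" using K by auto
    ultimately show False using Fs(3) G unfolding intersecting_def by blast
  qed
qed

lemma NY_facts:
  assumes "S \<subseteq> {1..n}" "e \<subseteq> {n+1..m}"
  shows "(S \<union> e) \<inter> {1..n} = S" "(S \<union> e) \<inter> {n+1..m} = e" "S \<inter> e = {}"
  using assms by (auto simp: subset_iff) (meson Suc_le_eq not_le)+

lemma finF: "mnk_intersecting m n k F \<Longrightarrow> finite F"
  unfolding mnk_intersecting_def ksubsets_def
  by (rule finite_subset[of _ "Pow {1..m}"]) auto

lemma decomp:
  assumes F: "mnk_intersecting m n k F"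
  shows "card F = (n choose k) + (\<Sum>S\<in>{S. S \<subseteq> {1..n} \<and> card S = k-2}. ww m n F S)"
proof -
  let ?N = "{1..n}" and ?Y = "{n+1..m}" and ?K = "{S. S \<subseteq> {1..n} \<and> card S = k-2}"
  define F0 where "F0 = {G\<in>F. card (G \<inter> ?Y) = 0}"
  define F1 where "F1 = {G\<in>F. card (G \<inter> ?Y) = 1}"
  define F2 where "F2 = {G\<in>F. card (G \<inter> ?Y) = 2}"
  have fin: "finite F" using finF[OF F] .
  have Fs: "F \<subseteq> ksubsets {1..m} k" "ksubsets {1..n} k \<subseteq> F"
    using F unfolding mnk_intersecting_def by auto
  have finK: "finite ?K" by (rule finite_subset[of _ "Pow ?N"]) auto
  have FU: "F = F0 \<union> F1 \<union> F2"
  proof (intro equalityI subsetI)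
    fix G assume G: "G \<in> F"
    then have "card (G \<inter> ?Y) \<le> 2" by (rule member_Y(3)[OF F])
    then have "card (G \<inter> ?Y) = 0 \<or> card (G \<inter> ?Y) = 1 \<or> card (G \<inter> ?Y) = 2" by linarith
    then show "G \<in> F0 \<union> F1 \<union> F2" using G unfolding F0_def F1_def F2_def by blast
  qed (auto simp: F0_def F1_def F2_def)
  have F0eq: "F0 = ksubsets ?N k"
  proof (intro equalityI subsetI)
    fix G assume G: "G \<in> F0"
    then have GF: "G \<in> F" "card (G \<inter> ?Y) = 0" unfolding F0_def by auto
    then have "G \<inter> ?Y = {}" by (metis card_0_eq finite_Int finite_atLeastAtMost)
    moreover have "G \<subseteq> {1..m}" "card G = k" using member_Y[OF F GF(1)] by auto
    ultimately show "G \<in> ksubsets ?N k" using split_card(1)[OF _ basics(3)] unfolding ksubsets_def by auto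
  next
    fix G assume G: "G \<in> ksubsets ?N k"
    then have "G \<inter> ?Y = {}" unfolding ksubsets_def by auto
    then show "G \<in> F0" using G Fs unfolding F0_def by auto
  qed
  have c0: "card F0 = n choose k" unfolding F0eq ksubsets_def using n_subsets[of ?N k] by simp
  have bij2: "bij_betw (\<lambda>(S, e). S \<union> e) (SIGMA S:?K. EE m n F S) F2"
  proof (rule bij_betw_imageI)
    show "inj_on (\<lambda>(S, e). S \<union> e) (SIGMA S:?K. EE m n F S)"
    proof (rule inj_onI)
      fix u v assume uv: "u \<in> (SIGMA S:?K. EE m n F S)" "v \<in> (SIGMA S:?K. EE m n F S)"
        "(\<lambda>(S, e). S \<union> e) u = (\<lambda>(S, e). S \<union> e) v"
      obtain S e where u: "u = (S, e)" by (cases u)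
      obtain S' e' where v: "v = (S', e')" by (cases v)
      have a: "S \<union> e = S' \<union> e'" using uv u v by simp
      have h: "S \<subseteq> ?N" "e \<subseteq> ?Y" "S' \<subseteq> ?N" "e' \<subseteq> ?Y" using uv u v unfolding EE_def by auto
      have "S = S'" using NY_facts(1)[OF h(1,2)] NY_facts(1)[OF h(3,4)] a by simp
      moreover have "e = e'" using NY_facts(2)[OF h(1,2)] NY_facts(2)[OF h(3,4)] a by simp
      ultimately have "S = S' \<and> e = e'" by simp
      then show "u = v" using u v by simp
    qed
    show "(\<lambda>(S, e). S \<union> e) ` (SIGMA S:?K. EE m n F S) = F2"
    proof (intro equalityI subsetI)
      fix G assume "G \<in> (\<lambda>(S, e). S \<union> e) ` (SIGMA S:?K. EE m n F S)"
      then obtain S e where a: "S \<in> ?K" "e \<in> EE m n F S" "G = S \<union> e" by auto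
      have h: "S \<subseteq> ?N" "e \<subseteq> ?Y" "card e = 2" "S \<union> e \<in> F" using a unfolding EE_def by auto
      have "G \<inter> ?Y = e" using NY_facts(2)[OF h(1,2)] a(3) by simp
      then show "G \<in> F2" using h a(3) unfolding F2_def by simp
    next
      fix G assume "G \<in> F2"
      then have G: "G \<in> F" "card (G \<inter> ?Y) = 2" unfolding F2_def by auto
      have Gm: "G \<subseteq> {1..m}" "card G = k" using member_Y[OF F G(1)] by auto
      note sp = split_card[OF Gm(1) basics(3)]
      have "card (G \<inter> ?N) = k - 2" using sp(3) Gm(2) G(2) by linarith
      then have "G \<inter> ?N \<in> ?K" "G \<inter> ?Y \<in> EE m n F (G \<inter> ?N)"
        unfolding EE_def using G sp(1) by auto
      then have "(G \<inter> ?N, G \<inter> ?Y) \<in> (SIGMA S:?K. EE m n F S)" by simp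
      moreover have "G = (\<lambda>(S, e). S \<union> e) (G \<inter> ?N, G \<inter> ?Y)" using sp(1) by simp
      ultimately show "G \<in> (\<lambda>(S, e). S \<union> e) ` (SIGMA S:?K. EE m n F S)" by (rule rev_image_eqI)
    qed
  qed
  have c2: "card F2 = (\<Sum>S\<in>?K. card (EE m n F S))"
  proof -
    have "\<forall>S\<in>?K. finite (EE m n F S)" unfolding EE_def
      by (auto intro: finite_subset[of _ "Pow ?Y"])
    then show ?thesis using bij_betw_same_card[OF bij2] card_SigmaI[OF finK] by simp
  qed
  have bij1: "bij_betw (\<lambda>(S, y). insert y (?N - S)) (SIGMA S:?K. ZZ m n F S) F1"
  proof (rule bij_betw_imageI)
    show "inj_on (\<lambda>(S, y). insert y (?N - S)) (SIGMA S:?K. ZZ m n F S)"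
    proof (rule inj_onI)
      fix u v assume uv: "u \<in> (SIGMA S:?K. ZZ m n F S)" "v \<in> (SIGMA S:?K. ZZ m n F S)"
        "(\<lambda>(S, y). insert y (?N - S)) u = (\<lambda>(S, y). insert y (?N - S)) v"
      obtain S y where u: "u = (S, y)" by (cases u)
      obtain S' y' where v: "v = (S', y')" by (cases v)
      have a5: "(?N - S) \<union> {y} = (?N - S') \<union> {y'}" using uv u v by simp
      have s: "S \<subseteq> ?N" "{y} \<subseteq> ?Y" "S' \<subseteq> ?N" "{y'} \<subseteq> ?Y" using uv u v unfolding ZZ_def by auto
      have "?N - S \<subseteq> ?N" "?N - S' \<subseteq> ?N" by auto
      then have "?N - S = ?N - S'" "{y} = {y'}"
        using NY_facts[of "?N - S" "{y}"] NY_facts[of "?N - S'" "{y'}"] s a5 by metis+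
      then have "S = S' \<and> y = y'" using s by blast
      then show "u = v" using u v by simp
    qed
    show "(\<lambda>(S, y). insert y (?N - S)) ` (SIGMA S:?K. ZZ m n F S) = F1"
    proof (intro equalityI subsetI)
      fix G assume "G \<in> (\<lambda>(S, y). insert y (?N - S)) ` (SIGMA S:?K. ZZ m n F S)"
      then obtain S y where a: "S \<in> ?K" "y \<in> ZZ m n F S" "G = insert y (?N - S)" by auto
      have y: "y \<in> ?Y" "insert y (?N - S) \<in> F" using a unfolding ZZ_def by auto
      have "G \<inter> ?Y = {y}" using a(3) y(1) by auto
      then show "G \<in> F1" using y a(3) unfolding F1_def by auto
    next
      fix G assume "G \<in> F1"
      then have G: "G \<in> F" "card (G \<inter> ?Y) = 1" unfolding F1_def by auto
      obtain y where y: "G \<inter> ?Y = {y}" using G(2) card_1_singletonE by blast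
      have Gm: "G \<subseteq> {1..m}" "card G = k" using member_Y[OF F G(1)] by auto
      note sp = split_card[OF Gm(1) basics(3)]
      have cA: "card (G \<inter> ?N) = k - 1" using sp(3) Gm(2) G(2) by linarith
      have "card (?N - (G \<inter> ?N)) = n - (k - 1)" using cA by (simp add: card_Diff_subset)
      then have "card (?N - (G \<inter> ?N)) = k - 2" using nk k3 by linarith
      then have S: "?N - (G \<inter> ?N) \<in> ?K" by auto
      have GG: "insert y (?N - (?N - (G \<inter> ?N))) = G" using sp(1) y by auto
      then have "y \<in> ZZ m n F (?N - (G \<inter> ?N))" unfolding ZZ_def using y G(1) by auto
      then have "(?N - (G \<inter> ?N), y) \<in> (SIGMA S:?K. ZZ m n F S)" using S by simp
      then show "G \<in> (\<lambda>(S, y). insert y (?N - S)) ` (SIGMA S:?K. ZZ m n F S)"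
        using GG by (metis (no_types, lifting) case_prod_conv rev_image_eqI)
    qed
  qed
  have c1: "card F1 = (\<Sum>S\<in>?K. card (ZZ m n F S))"
  proof -
    have "\<forall>S\<in>?K. finite (ZZ m n F S)" unfolding ZZ_def by auto
    then show ?thesis using bij_betw_same_card[OF bij1] card_SigmaI[OF finK] by simp
  qed
  have "card F = card F0 + card F1 + card F2"
  proof -
    have d: "F0 \<inter> F1 = {}" "(F0 \<union> F1) \<inter> F2 = {}" unfolding F0_def F1_def F2_def by auto
    have f: "finite F0" "finite F1" "finite F2" using fin unfolding F0_def F1_def F2_def by auto
    show ?thesis using card_Un_disjoint[OF _ _ d(1)] card_Un_disjoint[OF _ _ d(2)] f FU by simp
  qed
  then show ?thesis using c0 c1 c2 unfolding ww_def by (simp add: sum.distrib)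
qed

end

lemma card2E: assumes "card e = 2" obtains u v where "e = {u, v}" "u \<noteq> v"
  using assms by (meson card_2_iff)

lemma fin_sub: "finite Y \<Longrightarrow> finite {e. e \<subseteq> Y \<and> P e}"
  by (rule finite_subset[of _ "Pow Y"]) auto

lemma two_elem_other:
  assumes "card e = 2" "b \<in> e" obtains c where "e = {b, c}" "c \<noteq> b"
proof -
  obtain u v where uv: "e = {u, v}" "u \<noteq> v" using assms(1) by (rule card2E)
  show ?thesis
  proof (cases "u = b")
    case True then show ?thesis using that uv by blast
  next
    case False then have "v = b" using uv assms by auto
    then show ?thesis using that[of u] uv by (simp add: insert_commute)
  qed
qed

lemma pairs_at_le:
  assumes Y: "finite Y" and a: "a \<in> Y"
  shows "card {e. e \<subseteq> Y \<and> card e = 2 \<and> a \<in> e} \<le> card Y - 1"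
proof -
  have "{e. e \<subseteq> Y \<and> card e = 2 \<and> a \<in> e} \<subseteq> (\<lambda>z. {a, z}) ` (Y - {a})"
  proof
    fix e assume e: "e \<in> {e. e \<subseteq> Y \<and> card e = 2 \<and> a \<in> e}"
    then have "card e = 2" by auto
    then obtain u v where uv: "e = {u, v}" "u \<noteq> v" by (rule card2E)
    show "e \<in> (\<lambda>z. {a, z}) ` (Y - {a})"
    proof (cases "u = a")
      case True then show ?thesis using uv e by auto
    next
      case False then have "v = a" using uv e by auto
      then show ?thesis using uv e False by (auto intro!: image_eqI[of _ _ u])
    qed
  qed
  then have "card {e. e \<subseteq> Y \<and> card e = 2 \<and> a \<in> e} \<le> card ((\<lambda>z. {a, z}) ` (Y - {a}))"
    by (rule card_mono[rotated]) (use Y in auto)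
  also have "\<dots> \<le> card (Y - {a})" by (rule card_image_le) (use Y in auto)
  also have "\<dots> = card Y - 1" using Y a by simp
  finally show ?thesis .
qed

lemma pairwise_int_small:
  assumes Y: "finite Y" "card Y \<ge> 4" and G: "G \<subseteq> {e. e \<subseteq> Y \<and> card e = 2}"
    and I: "\<forall>e1\<in>G. \<forall>e2\<in>G. e1 \<inter> e2 \<noteq> {}"
  shows "card G \<le> card Y - 1"
proof (cases "G = {}")
  case True then show ?thesis by simp
next
  case False
  then obtain e0 where e0: "e0 \<in> G" by blast
  have "card e0 = 2" using e0 G by auto
  then obtain a b where ab: "e0 = {a, b}" "a \<noteq> b" by (rule card2E)
  have aY: "a \<in> Y" "b \<in> Y" using e0 ab G by auto
  show ?thesis
  proof (cases "\<forall>e\<in>G. a \<in> e")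
    case True
    then have "G \<subseteq> {e. e \<subseteq> Y \<and> card e = 2 \<and> a \<in> e}" using G by auto
    then have "card G \<le> card {e. e \<subseteq> Y \<and> card e = 2 \<and> a \<in> e}"
      by (rule card_mono[rotated]) (rule fin_sub[OF Y(1)])
    then show ?thesis using pairs_at_le[OF Y(1) aY(1)] by linarith
  next
    case Fa: False
    then obtain e1 where e1: "e1 \<in> G" "a \<notin> e1" by blast
    show ?thesis
    proof (cases "\<forall>e\<in>G. b \<in> e")
      case True
      then have "G \<subseteq> {e. e \<subseteq> Y \<and> card e = 2 \<and> b \<in> e}" using G by auto
      then have "card G \<le> card {e. e \<subseteq> Y \<and> card e = 2 \<and> b \<in> e}"
        by (rule card_mono[rotated]) (rule fin_sub[OF Y(1)])
      then show ?thesis using pairs_at_le[OF Y(1) aY(2)] by linarith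
    next
      case False
      then obtain e2 where e2: "e2 \<in> G" "b \<notin> e2" by blast
      have "b \<in> e1" using I e1 e0 ab by auto
      moreover have "card e1 = 2" using e1 G by auto
      ultimately obtain c where c: "e1 = {b, c}" "c \<noteq> b" using two_elem_other by metis
      have "c \<noteq> a" using c e1 by auto
      have "a \<in> e2" using I e2 e0 ab by auto
      moreover have "card e2 = 2" using e2 G by auto
      ultimately obtain d where d: "e2 = {a, d}" "d \<noteq> a" using two_elem_other by metis
      have "d \<noteq> b" using d e2 by auto
      have "c = d" using I e1(1) e2(1) c d \<open>c \<noteq> a\<close> \<open>d \<noteq> b\<close> ab by auto
      have sub: "G \<subseteq> {e. e \<subseteq> {a, b, c} \<and> card e = 2}"
      proof
        fix e assume e: "e \<in> G"
        then have "card e = 2" using G by auto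
        then obtain u v where uv: "e = {u, v}" "u \<noteq> v" by (rule card2E)
        have "e \<inter> e0 \<noteq> {}" "e \<inter> e1 \<noteq> {}" "e \<inter> e2 \<noteq> {}" using I e e0 e1 e2 by auto
        then have "e \<subseteq> {a, b, c}" using uv ab c d \<open>c = d\<close> \<open>c \<noteq> a\<close> by auto
        then show "e \<in> {e. e \<subseteq> {a, b, c} \<and> card e = 2}" using e G by auto
      qed
      have "card {e. e \<subseteq> {a, b, c} \<and> card e = 2} = 3"
        using n_subsets[of "{a, b, c}" 2] ab \<open>c \<noteq> a\<close> c by (simp add: choose_two)
      moreover have "card G \<le> card {e. e \<subseteq> {a, b, c} \<and> card e = 2}"
        by (rule card_mono[OF fin_sub sub]) simp
      ultimately have "card G \<le> 3" by simp
      then show ?thesis using Y by linarith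
    qed
  qed
qed

lemma cross_small:
  assumes d: "e1 \<inter> e2 = {}" and c: "card e1 = 2" "card e2 = 2"
    and G: "\<forall>e\<in>G. card e = 2 \<and> e \<inter> e1 \<noteq> {} \<and> e \<inter> e2 \<noteq> {}"
  shows "card G \<le> 4"
proof -
  have f: "finite e1" "finite e2" using c by (auto intro: card_ge_0_finite)
  have "G \<subseteq> (\<lambda>(u, v). {u, v}) ` (e1 \<times> e2)"
  proof
    fix e assume e: "e \<in> G"
    then obtain x y where xy: "x \<in> e" "x \<in> e1" "y \<in> e" "y \<in> e2" using G by blast
    have "x \<noteq> y" using xy d by auto
    moreover have "card e = 2" using G e by auto
    ultimately have ce: "card e = 2" "card {x, y} = 2" by auto
    have fe: "finite e" using ce by (auto intro: card_ge_0_finite)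
    have "{x, y} = e" by (rule card_subset_eq[OF fe]) (use xy ce in auto)
    then have "e = {x, y}" by simp
    then show "e \<in> (\<lambda>(u, v). {u, v}) ` (e1 \<times> e2)" using xy by force
  qed
  then have "card G \<le> card ((\<lambda>(u, v). {u, v}) ` (e1 \<times> e2))"
    by (rule card_mono[rotated]) (use f in auto)
  also have "\<dots> \<le> card (e1 \<times> e2)" by (rule card_image_le) (use f in auto)
  also have "\<dots> = 4" using c by (simp add: card_cartesian_product)
  finally show ?thesis .
qed

lemma graph_cross:
  assumes Y: "finite Y" "card Y \<ge> 4"
    and G1: "G1 \<subseteq> {e. e \<subseteq> Y \<and> card e = 2}" and G2: "G2 \<subseteq> {e. e \<subseteq> Y \<and> card e = 2}"
    and X: "\<forall>e\<in>G1. \<forall>f\<in>G2. e \<inter> f \<noteq> {}"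
    and c1: "card G1 > card Y" and c2: "card G2 > card Y"
  shows False
proof -
  have "\<not> (\<forall>e1\<in>G1. \<forall>e2\<in>G1. e1 \<inter> e2 \<noteq> {})"
    using pairwise_int_small[OF Y G1] c1 by linarith
  then obtain e1 e2 where e: "e1 \<in> G1" "e2 \<in> G1" "e1 \<inter> e2 = {}" by blast
  have "card e1 = 2" "card e2 = 2" using e G1 by auto
  moreover have "\<forall>e\<in>G2. card e = 2 \<and> e \<inter> e1 \<noteq> {} \<and> e \<inter> e2 \<noteq> {}"
    using X e G2 by blast
  ultimately have "card G2 \<le> 4" using cross_small[OF e(3)] by blast
  then show False using c2 Y by linarith
qed

context LS begin

lemma cross_ZE:
  assumes F: "mnk_intersecting m n k F" and S: "S \<subseteq> {1..n}"
    and e: "e \<in> EE m n F S" and y: "y \<in> ZZ m n F S"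
  shows "y \<in> e"
proof -
  have "S \<union> e \<in> F" "insert y ({1..n} - S) \<in> F" "e \<subseteq> {n+1..m}" "y \<in> {n+1..m}"
    using e y unfolding EE_def ZZ_def by auto
  moreover have "intersecting F" using F unfolding mnk_intersecting_def by simp
  ultimately have "(S \<union> e) \<inter> insert y ({1..n} - S) \<noteq> {}" unfolding intersecting_def by blast
  moreover have "e \<inter> ({1..n} - S) = {}" using \<open>e \<subseteq> {n+1..m}\<close> by auto
  moreover have "y \<notin> S" using S \<open>y \<in> {n+1..m}\<close> by auto
  ultimately show ?thesis by auto
qed

lemma EE_sub: "EE m n F S \<subseteq> {e. e \<subseteq> {n+1..m} \<and> card e = 2}"
  unfolding EE_def by auto

lemma w_bound:
  assumes F: "mnk_intersecting m n k F" and S: "S \<subseteq> {1..n}"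
  shows "ww m n F S \<le> m - n \<or> (ZZ m n F S = {} \<and> card (EE m n F S) > m - n)"
proof (cases "ZZ m n F S = {}")
  case True then show ?thesis unfolding ww_def by auto
next
  case False
  then obtain y where y: "y \<in> ZZ m n F S" by blast
  have yY: "y \<in> {n+1..m}" using y unfolding ZZ_def by auto
  have ZY: "ZZ m n F S \<subseteq> {n+1..m}" unfolding ZZ_def by auto
  have cZ: "card (ZZ m n F S) \<le> m - n" using card_mono[OF _ ZY] by simp
  show ?thesis
  proof (cases "EE m n F S = {}")
    case True then show ?thesis using cZ unfolding ww_def by simp
  next
    case False
    then obtain e0 where e0: "e0 \<in> EE m n F S" by blast
    have Ze0: "ZZ m n F S \<subseteq> e0" using cross_ZE[OF F S e0] by auto
    have ce0: "card e0 = 2" using e0 unfolding EE_def by auto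
    have "EE m n F S \<subseteq> {e. e \<subseteq> {n+1..m} \<and> card e = 2 \<and> y \<in> e}"
      using cross_ZE[OF F S _ y] unfolding EE_def by auto
    then have "card (EE m n F S) \<le> card {e. e \<subseteq> {n+1..m} \<and> card e = 2 \<and> y \<in> e}"
      by (rule card_mono[rotated]) (rule fin_sub, simp)
    also have "\<dots> \<le> card {n+1..m} - 1" by (rule pairs_at_le[OF _ yY]) simp
    finally have cE: "card (EE m n F S) \<le> m - n - 1" by simp
    have fe0: "finite e0" using ce0 by (auto intro: card_ge_0_finite)
    have "card (ZZ m n F S) \<le> 2" using card_mono[OF fe0 Ze0] ce0 by simp
    show ?thesis
    proof (cases "card (ZZ m n F S) \<le> 1")
      case True then show ?thesis using cE basics(4) unfolding ww_def by linarith
    next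
      case False
      then have "card (ZZ m n F S) = 2" using \<open>card (ZZ m n F S) \<le> 2\<close> by linarith
      then have Zeq: "ZZ m n F S = e0" using card_subset_eq[OF fe0 Ze0] ce0 by simp
      have "EE m n F S \<subseteq> {e0}"
      proof
        fix e assume e: "e \<in> EE m n F S"
        then have "e0 \<subseteq> e" "card e = 2" using cross_ZE[OF F S e] Zeq unfolding EE_def by auto
        moreover have "finite e" using \<open>card e = 2\<close> by (auto intro: card_ge_0_finite)
        ultimately have "e0 = e" using ce0 card_subset_eq by metis
        then show "e \<in> {e0}" by simp
      qed
      then have "card (EE m n F S) \<le> card {e0}" by (rule card_mono[rotated]) simp
      then have "card (EE m n F S) \<le> 1" by simp
      then show ?thesis using \<open>card (ZZ m n F S) = 2\<close> basics(4) unfolding ww_def by linarith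
    qed
  qed
qed

end

context LS begin

lemma M_gt: "m - n < (m - n) choose 2" "m - n \<le> (m - n) choose 2"
proof -
  let ?p = "m - n"
  have p4: "?p \<ge> 4" using basics(4) .
  have "?p * (?p - 1) \<ge> ?p * 3" by (rule mult_le_mono2) (use p4 in linarith)
  then have "?p * (?p - 1) \<ge> 2 * ?p + 2" using p4 by linarith
  then have "?p * (?p - 1) div 2 \<ge> (2 * ?p + 2) div 2" by (rule div_le_mono)
  then have "(m - n) choose 2 \<ge> ?p + 1" by (simp add: choose_two)
  then show "m - n < (m - n) choose 2" "m - n \<le> (m - n) choose 2" by linarith+
qed

lemma card_pairsY: "card {e. e \<subseteq> {n+1..m} \<and> card e = 2} = (m - n) choose 2"
  using n_subsets[of "{n+1..m}" 2] by simp

lemma w_le_M: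
  assumes F: "mnk_intersecting m n k F" and S: "S \<subseteq> {1..n}"
  shows "ww m n F S \<le> (m - n) choose 2"
proof -
  have "card (EE m n F S) \<le> (m - n) choose 2"
    using card_mono[OF fin_sub EE_sub] card_pairsY by (metis finite_atLeastAtMost)
  then show ?thesis using w_bound[OF F S] M_gt unfolding ww_def by auto
qed

lemma w_disj:
  assumes F: "mnk_intersecting m n k F" and S: "S \<subseteq> {1..n}" and T: "T \<subseteq> {1..n}"
    and d: "S \<inter> T = {}" and wS: "ww m n F S > m - n" and wT: "ww m n F T > m - n"
  shows False
proof -
  have bS: "card (EE m n F S) > m - n" using w_bound[OF F S] wS by linarith
  have bT: "card (EE m n F T) > m - n" using w_bound[OF F T] wT by linarith
  have I: "intersecting F" using F unfolding mnk_intersecting_def by simp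
  have X: "\<forall>e\<in>EE m n F S. \<forall>f\<in>EE m n F T. e \<inter> f \<noteq> {}"
  proof (intro ballI)
    fix e f assume e: "e \<in> EE m n F S" and f: "f \<in> EE m n F T"
    have h: "S \<union> e \<in> F" "T \<union> f \<in> F" "e \<subseteq> {n+1..m}" "f \<subseteq> {n+1..m}"
      using e f unfolding EE_def by auto
    then have "(S \<union> e) \<inter> (T \<union> f) \<noteq> {}" using I unfolding intersecting_def by blast
    moreover have "S \<inter> f = {}" "e \<inter> T = {}" using NY_facts(3)[OF S h(4)] NY_facts(3)[OF T h(3)] by auto
    ultimately show "e \<inter> f \<noteq> {}" using d by auto
  qed
  show False
    by (rule graph_cross[of "{n+1..m}" "EE m n F S" "EE m n F T"])
       (use basics(4) EE_sub X bS bT in auto)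
qed

lemma h_eq: "h m n k = (n choose k) + ((2*(k-2)) choose (k-2)) * (m - n) + ((2*(k-2)) choose (k-2-1)) * ((m-n) choose 2)"
proof -
  have "2*k - n - 1 = 2" using k3 nk by linarith
  then have "h m n k = (n choose k) + (\<Sum>i=1..2. ((n-1) choose (k-i-1)) * ((m-n) choose i))"
    unfolding h_def by simp
  also have "(\<Sum>i=1..2. ((n-1) choose (k-i-1)) * ((m-n) choose i)) =
      ((n-1) choose (k-2)) * (m - n) + ((n-1) choose (k-3)) * ((m-n) choose 2)"
    by (simp add: numeral_2_eq_2 numeral_3_eq_3)
  also have "n - 1 = 2*(k-2)" using k3 nk by linarith
  also have "k - 3 = k - 2 - 1" by simp
  finally show ?thesis by simp
qed

end

context LS begin

lemma pascal_s: "(s::nat) \<ge> 1 \<Longrightarrow> Suc (2*s) choose s = ((2*s) choose (s-1)) + ((2*s) choose s)"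
proof -
  assume "s \<ge> 1"
  then obtain t where t: "s = Suc t" by (cases s) auto
  have "Suc (2*s) choose Suc t = ((2*s) choose t) + ((2*s) choose Suc t)" by (rule binomial_Suc_Suc)
  then show ?thesis using t by simp
qed

lemma cK: "card {S. S \<subseteq> {1..n} \<and> card S = k-2} = ((2*(k-2)) choose (k-2-1)) + ((2*(k-2)) choose (k-2))"
proof -
  have "card {S. S \<subseteq> {1..n} \<and> card S = k-2} = n choose (k-2)" using n_subsets[of "{1..n}" "k-2"] by simp
  also have "n choose (k-2) = Suc (2*(k-2)) choose (k-2)" using basics(1) by simp
  finally show ?thesis using pascal_s[OF basics(2)] by simp
qed

lemma main_bound:
  assumes F: "mnk_intersecting m n k F"
  shows "card F \<le> h m n k"
    and "card F = h m n k \<Longrightarrow> \<exists>t\<in>{1..n}. \<forall>S. S \<subseteq> {1..n} \<and> card S = k-2 \<longrightarrow>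
          (t \<in> S \<longrightarrow> ZZ m n F S = {} \<and> EE m n F S = {e. e \<subseteq> {n+1..m} \<and> card e = 2}) \<and>
          (t \<notin> S \<longrightarrow> EE m n F S = {} \<and> ZZ m n F S = {n+1..m})"
proof -
  let ?N = "{1..n}" and ?Y = "{n+1..m}"
  define s where "s = k - 2"
  define p where "p = m - n"
  define M where "M = p choose 2"
  define K where "K = {S. S \<subseteq> ?N \<and> card S = s}"
  define SS where "SS = {S\<in>K. ww m n F S > p}"
  define C1 where "C1 = (2*s) choose (s-1)"
  define C0 where "C0 = (2*s) choose s"
  have hn: "card ?N = 2*s+1" using basics(1) unfolding s_def by simp
  have s1: "s \<ge> 1" using basics(2) unfolding s_def .
  have pM: "p < M" "p \<le> M" using M_gt unfolding M_def p_def by auto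
  have SSK: "SS \<subseteq> K" unfolding SS_def by auto
  have finK: "finite K" unfolding K_def by (rule fin_sub) simp
  have ISS: "\<forall>A\<in>SS. \<forall>B\<in>SS. A \<inter> B \<noteq> {}"
  proof (intro ballI notI)
    fix A B assume "A \<in> SS" "B \<in> SS" "A \<inter> B = {}"
    then show False using w_disj[OF F, of A B] unfolding SS_def K_def p_def by auto
  qed
  have SSK': "SS \<subseteq> {S. S \<subseteq> ?N \<and> card S = s}" using SSK unfolding K_def .
  have cSS: "card SS \<le> C1" using ekr_katona(1)[OF _ hn s1 SSK' ISS] unfolding C1_def by simp
  have cKK: "card K = C1 + C0" using cK unfolding K_def C1_def C0_def s_def .
  define g where "g S = (if S \<in> SS then M else p)" for S
  have wg: "ww m n F S \<le> g S" if "S \<in> K" for S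
  proof (cases "S \<in> SS")
    case True then show ?thesis using w_le_M[OF F] that unfolding g_def M_def p_def K_def by auto
  next
    case False then show ?thesis using that unfolding g_def SS_def by auto
  qed
  have finSS: "finite SS" using finK SSK finite_subset by blast
  have sg: "(\<Sum>S\<in>K. g S) = p * card K + (M - p) * card SS"
  proof -
    have "(\<Sum>S\<in>K. g S) = (\<Sum>S\<in>SS. g S) + (\<Sum>S\<in>K - SS. g S)"
      using sum.subset_diff[OF SSK finK] by (simp add: add.commute)
    also have "(\<Sum>S\<in>SS. g S) = M * card SS" unfolding g_def by simp
    also have "(\<Sum>S\<in>K - SS. g S) = p * (card K - card SS)" unfolding g_def
      using card_Diff_subset[OF finSS SSK] by simp
    finally have e: "(\<Sum>S\<in>K. g S) = M * card SS + p * (card K - card SS)" .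
    have "card SS \<le> card K" using card_mono[OF finK SSK] .
    then have "M * card SS + p * (card K - card SS) = p * card K + (M - p) * card SS"
      using pM by (simp add: diff_mult_distrib diff_mult_distrib2 algebra_simps)
    then show ?thesis using e by simp
  qed
  have dec: "card F = (n choose k) + (\<Sum>S\<in>K. ww m n F S)"
    using decomp[OF F] unfolding K_def s_def .
  have sle: "(\<Sum>S\<in>K. ww m n F S) \<le> (\<Sum>S\<in>K. g S)" by (rule sum_mono) (rule wg)
  have hh: "h m n k = (n choose k) + p * card K + (M - p) * C1"
  proof -
    have "p * card K + (M - p) * C1 = C0 * p + C1 * M"
      using cKK pM by (simp add: diff_mult_distrib diff_mult_distrib2 algebra_simps)
    then show ?thesis using h_eq unfolding C0_def C1_def M_def p_def s_def by simp
  qed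
  have mono: "(M - p) * card SS \<le> (M - p) * C1" using cSS by simp
  show "card F \<le> h m n k" using dec sle sg hh mono by linarith
  assume eq: "card F = h m n k"
  have "(M - p) * card SS \<ge> (M - p) * C1" using dec sle sg hh eq by linarith
  then have "card SS \<ge> C1" using pM by simp
  then have cSSe: "card SS = C1" using cSS by simp
  have sg': "(\<Sum>S\<in>K. g S) = p * card K + (M - p) * C1" using sg cSSe by simp
  have sumeq: "(\<Sum>S\<in>K. ww m n F S) = (\<Sum>S\<in>K. g S)" using dec sle sg' hh eq by linarith
  have wgeq: "ww m n F S = g S" if "S \<in> K" for S
  proof (rule ccontr)
    assume "ww m n F S \<noteq> g S"
    then have "ww m n F S < g S" using wg[OF that] by simp
    then have "(\<Sum>S\<in>K. ww m n F S) < (\<Sum>S\<in>K. g S)"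
      using sum_strict_mono_ex1[OF finK, of "ww m n F" g] wg that by blast
    then show False using sumeq by simp
  qed
  obtain t where t: "t \<in> ?N" "SS = {S. S \<subseteq> ?N \<and> card S = s \<and> t \<in> S}"
    using ekr_unique[OF _ hn s1 SSK' ISS] cSSe unfolding C1_def by auto
  have I: "intersecting F" using F unfolding mnk_intersecting_def by simp
  have inS: "ZZ m n F S = {} \<and> EE m n F S = {e. e \<subseteq> ?Y \<and> card e = 2}"
    if S: "S \<subseteq> ?N" "card S = s" "t \<in> S" for S
  proof -
    have SK: "S \<in> SS" "S \<in> K" using t S unfolding K_def by auto
    then have w: "ww m n F S = M" using wgeq unfolding g_def by simp
    have "ww m n F S > p" using SK unfolding SS_def by auto
    then have Z: "ZZ m n F S = {}" using w_bound[OF F S(1)] unfolding p_def by linarith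
    then have "card (EE m n F S) = M" using w unfolding ww_def by simp
    then have ce: "card (EE m n F S) = card {e. e \<subseteq> ?Y \<and> card e = 2}"
      using card_pairsY unfolding M_def p_def by simp
    have fp: "finite {e. e \<subseteq> ?Y \<and> card e = 2}" by (rule fin_sub) simp
    have "EE m n F S = {e. e \<subseteq> ?Y \<and> card e = 2}" by (rule card_subset_eq[OF fp EE_sub ce])
    then show ?thesis using Z by simp
  qed
  have notS: "EE m n F S = {} \<and> ZZ m n F S = ?Y"
    if S: "S \<subseteq> ?N" "card S = s" "t \<notin> S" for S
  proof -
    have SK: "S \<notin> SS" "S \<in> K" using t S unfolding K_def by auto
    then have w: "ww m n F S = p" using wgeq unfolding g_def by simp
    have E: "EE m n F S = {}"
    proof (rule ccontr)
      assume "EE m n F S \<noteq> {}"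
      then obtain e where e: "e \<in> EE m n F S" by blast
      have eh: "S \<union> e \<in> F" "e \<subseteq> ?Y" "card e = 2" using e unfolding EE_def by auto
      have finS: "finite S" using S(1) finite_subset by blast
      have "card (?N - S) = s + 1" using card_Diff_subset[OF finS S(1)] hn S(2) by simp
      then have "card (?N - S - {t}) = s" using t(1) S(3) by simp
      then have "?N - S - {t} \<noteq> {}" using s1 card_gt_0_iff[of "?N - S - {t}"] by linarith
      then obtain u where u: "u \<in> ?N - S - {t}" by blast
      define T where "T = ?N - S - {u}"
      have u': "u \<in> ?N - S" using u by simp
      have T1: "T \<subseteq> ?N" unfolding T_def by auto
      have T2: "card T = s" unfolding T_def using \<open>card (?N - S) = s + 1\<close> u' by (simp add: card_Diff_singleton)
      have T3: "t \<in> T" unfolding T_def using u t(1) S(3) by auto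
      have T4: "S \<inter> T = {}" unfolding T_def by auto
      have ET: "EE m n F T = {e. e \<subseteq> ?Y \<and> card e = 2}" using inS[OF T1 T2 T3] by simp
      have fine: "finite e" using eh(3) by (auto intro: card_ge_0_finite)
      have "card (?Y - e) = card ?Y - card e" by (rule card_Diff_subset[OF fine eh(2)])
      then have "card (?Y - e) = p - 2" using eh(3) unfolding p_def by simp
      then have "card (?Y - e) \<ge> 2" using basics(4) unfolding p_def by linarith
      then obtain f where f: "f \<subseteq> ?Y - e" "card f = 2" by (meson obtain_subset_with_card_n)
      have fY: "f \<subseteq> ?Y" using f(1) by auto
      then have "f \<in> EE m n F T" using ET f(2) by auto
      then have "T \<union> f \<in> F" unfolding EE_def by auto
      moreover have "(S \<union> e) \<inter> (T \<union> f) = {}"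
      proof -
        have "S \<inter> f = {}" by (rule NY_facts(3)[OF S(1) fY])
        moreover have "T \<inter> e = {}" by (rule NY_facts(3)[OF T1 eh(2)])
        moreover have "e \<inter> f = {}" using f(1) by auto
        ultimately show ?thesis using T4 by blast
      qed
      ultimately show False using I eh(1) unfolding intersecting_def by blast
    qed
    then have "card (ZZ m n F S) = p" using w unfolding ww_def by simp
    moreover have "ZZ m n F S \<subseteq> ?Y" unfolding ZZ_def by auto
    ultimately have "ZZ m n F S = ?Y" using card_subset_eq[of ?Y "ZZ m n F S"] unfolding p_def by simp
    then show ?thesis using E by simp
  qed
  show "\<exists>t\<in>{1..n}. \<forall>S. S \<subseteq> {1..n} \<and> card S = k-2 \<longrightarrow>
          (t \<in> S \<longrightarrow> ZZ m n F S = {} \<and> EE m n F S = {e. e \<subseteq> {n+1..m} \<and> card e = 2}) \<and>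
          (t \<notin> S \<longrightarrow> EE m n F S = {} \<and> ZZ m n F S = {n+1..m})"
  proof (rule bexI[OF _ t(1)], intro allI impI conjI)
    fix S assume S: "S \<subseteq> {1..n} \<and> card S = k - 2"
    then have S': "S \<subseteq> ?N" "card S = s" unfolding s_def by auto
    {
      assume "t \<in> S"
      then show "ZZ m n F S = {}" "EE m n F S = {e. e \<subseteq> {n+1..m} \<and> card e = 2}"
        using inS[OF S'] by auto
    next
      assume "t \<notin> S"
      then show "EE m n F S = {}" "ZZ m n F S = {n+1..m}" using notS[OF S'] by auto
    }
  qed
qed

end

context LS begin

lemma irange: "{1..2*k-n-1} = {1, 2::nat}"
proof -
  have "2*k - n - 1 = 2" using k3 nk by linarith
  then show ?thesis by auto
qed

lemma H_char:
  assumes t: "t \<in> {1..n}"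
  shows "G \<in> H m n k t \<longleftrightarrow> (G \<subseteq> {1..m} \<and> card G = k \<and> card (G \<inter> {n+1..m}) \<le> 2 \<and>
            (G \<inter> {n+1..m} \<noteq> {} \<longrightarrow> t \<in> G))"
proof
  assume G: "G \<in> H m n k t"
  show "G \<subseteq> {1..m} \<and> card G = k \<and> card (G \<inter> {n+1..m}) \<le> 2 \<and> (G \<inter> {n+1..m} \<noteq> {} \<longrightarrow> t \<in> G)"
  proof (cases "G \<in> ksubsets {1..n} k")
    case True
    then have "G \<subseteq> {1..n}" "card G = k" unfolding ksubsets_def by auto
    moreover have "G \<inter> {n+1..m} = {}" using \<open>G \<subseteq> {1..n}\<close> by auto
    ultimately show ?thesis using basics(3) by auto
  next
    case False
    then obtain i A B where iAB: "i \<in> {1, 2}" "G = A \<union> B \<union> {t}" "A \<in> ksubsets ({1..n} - {t}) (k-i-1)"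
      "B \<in> ksubsets {n+1..m} i"
      using G unfolding H_def irange by blast
    have A: "A \<subseteq> {1..n} - {t}" "card A = k-i-1" using iAB(3) unfolding ksubsets_def by auto
    have B: "B \<subseteq> {n+1..m}" "card B = i" using iAB(4) unfolding ksubsets_def by auto
    have fA: "finite A" using A(1) finite_subset by blast
    have fB: "finite B" using B(1) finite_subset by blast
    have dAB: "A \<inter> B = {}" using NY_facts(3)[of A B] A(1) B(1) by auto
    have tAB: "t \<notin> A \<union> B" using A(1) B(1) t by auto
    have "card G = card (A \<union> B) + 1" using iAB(2) tAB fA fB by simp
    also have "card (A \<union> B) = card A + card B" using card_Un_disjoint[OF fA fB dAB] .
    finally have cG: "card G = k" using A(2) B(2) iAB(1) k3 by auto
    have GY: "G \<inter> {n+1..m} = B" using iAB(2) A(1) B(1) t by auto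
    have "G \<subseteq> {1..m}" using iAB(2) A(1) B(1) t basics(3) by auto
    then show ?thesis using cG GY B(2) iAB(1) iAB(2) by auto
  qed
next
  assume P: "G \<subseteq> {1..m} \<and> card G = k \<and> card (G \<inter> {n+1..m}) \<le> 2 \<and> (G \<inter> {n+1..m} \<noteq> {} \<longrightarrow> t \<in> G)"
  note sp = split_card[OF conjunct1[OF P] basics(3)]
  show "G \<in> H m n k t"
  proof (cases "G \<inter> {n+1..m} = {}")
    case True
    then have "G \<in> ksubsets {1..n} k" using sp(1) P unfolding ksubsets_def by auto
    then show ?thesis unfolding H_def by simp
  next
    case False
    define i where "i = card (G \<inter> {n+1..m})"
    have i0: "i \<noteq> 0" using False unfolding i_def by simp
    have "i \<le> 2" using P unfolding i_def by simp
    then have i12: "i \<in> {1, 2}" using i0 by auto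
    have tG: "t \<in> G" using P False by auto
    define A where "A = G \<inter> {1..n} - {t}"
    define B where "B = G \<inter> {n+1..m}"
    have cGN: "card (G \<inter> {1..n}) = k - i" using sp(3) P unfolding i_def by linarith
    have "t \<in> G \<inter> {1..n}" using tG t by simp
    then have "card A = k - i - 1" unfolding A_def using cGN by simp
    then have "A \<in> ksubsets ({1..n} - {t}) (k-i-1)" unfolding A_def ksubsets_def by auto
    moreover have "B \<in> ksubsets {n+1..m} i" unfolding B_def i_def ksubsets_def by auto
    moreover have "G = A \<union> B \<union> {t}" unfolding A_def B_def using sp(1) tG by auto
    ultimately have "G \<in> {A \<union> B \<union> {t} |A B. A \<in> ksubsets ({1..n} - {t}) (k-i-1) \<and> B \<in> ksubsets {n+1..m} i}"
      by blast
    then show ?thesis unfolding H_def irange using i12 by blast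
  qed
qed

lemma H_int_aux:
  assumes t: "t \<in> {1..n}" and G1: "G1 \<in> H m n k t" and G2: "G2 \<in> H m n k t" and nt: "t \<notin> G1"
  shows "G1 \<inter> G2 \<noteq> {}"
proof -
  have P1: "G1 \<subseteq> {1..m}" "card G1 = k" "G1 \<inter> {n+1..m} = {}" using H_char[OF t] G1 nt by auto
  have P2: "G2 \<subseteq> {1..m}" "card G2 = k" "card (G2 \<inter> {n+1..m}) \<le> 2"
    "G2 \<inter> {n+1..m} \<noteq> {} \<longrightarrow> t \<in> G2" using H_char[OF t] G2 by auto
  have G1N: "G1 \<subseteq> {1..n} - {t}" using split_card(1)[OF P1(1) basics(3)] P1(3) nt by auto
  have cU: "card ({1..n} - {t}) = 2*k - 4" using t nk k3 by simp
  note sp2 = split_card[OF P2(1) basics(3)]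
  define A2 where "A2 = G2 \<inter> {1..n} - {t}"
  have A2s: "A2 \<subseteq> {1..n} - {t}" unfolding A2_def by auto
  have "card (G2 \<inter> {1..n}) \<ge> k - 2" using sp2(3) P2(2,3) by linarith
  moreover have "card (G2 \<inter> {1..n}) - card {t} \<le> card A2" unfolding A2_def by (rule diff_card_le_card_Diff) simp
  ultimately have "card A2 \<ge> k - 3" by simp
  then have "card G1 + card A2 > card ({1..n} - {t})" using cU P1(2) k3 by linarith
  then have "G1 \<inter> A2 \<noteq> {}" using disj_by_card[OF _ G1N A2s] by simp
  then show ?thesis unfolding A2_def by auto
qed

lemma H_mnk:
  assumes t: "t \<in> {1..n}"
  shows "mnk_intersecting m n k (H m n k t)"
  unfolding mnk_intersecting_def
proof (intro conjI)
  show "ksubsets {1..n} k \<subseteq> H m n k t" unfolding H_def by auto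
  show "H m n k t \<subseteq> ksubsets {1..m} k" using H_char[OF t] unfolding ksubsets_def by auto
  show "intersecting (H m n k t)" unfolding intersecting_def
  proof (intro ballI)
    fix A B assume A: "A \<in> H m n k t" and B: "B \<in> H m n k t"
    show "A \<inter> B \<noteq> {}"
    proof (cases "t \<in> A")
      case False then show ?thesis using H_int_aux[OF t A B] by simp
    next
      case True
      show ?thesis
      proof (cases "t \<in> B")
        case True then show ?thesis using \<open>t \<in> A\<close> by auto
      next
        case False then show ?thesis using H_int_aux[OF t B A] by auto
      qed
    qed
  qed
qed

lemma H_ww:
  assumes t: "t \<in> {1..n}" and S: "S \<subseteq> {1..n}" "card S = k - 2"
  shows "ww m n (H m n k t) S = (if t \<in> S then (m - n) choose 2 else m - n)"
proof -
  have finS: "finite S" using S(1) finite_subset by blast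
  show ?thesis
  proof (cases "t \<in> S")
    case True
    have E: "EE m n (H m n k t) S = {e. e \<subseteq> {n+1..m} \<and> card e = 2}"
    proof (intro equalityI subsetI)
      fix e assume "e \<in> EE m n (H m n k t) S" then show "e \<in> {e. e \<subseteq> {n+1..m} \<and> card e = 2}"
        unfolding EE_def by auto
    next
      fix e assume e: "e \<in> {e. e \<subseteq> {n+1..m} \<and> card e = 2}"
      then have eY: "e \<subseteq> {n+1..m}" "card e = 2" by auto
      have fe: "finite e" using eY(2) by (auto intro: card_ge_0_finite)
      have "card (S \<union> e) = card S + card e" by (rule card_Un_disjoint[OF finS fe NY_facts(3)[OF S(1) eY(1)]])
      then have "card (S \<union> e) = k" using S(2) eY(2) k3 by simp
      moreover have "(S \<union> e) \<inter> {n+1..m} = e" by (rule NY_facts(2)[OF S(1) eY(1)])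
      moreover have "S \<union> e \<subseteq> {1..m}" using S(1) eY(1) basics(3) by auto
      ultimately have "S \<union> e \<in> H m n k t" using eY(2) True by (intro H_char[OF t, THEN iffD2]) auto
      then show "e \<in> EE m n (H m n k t) S" unfolding EE_def using eY by auto
    qed
    have Z: "ZZ m n (H m n k t) S = {}"
    proof (rule ccontr)
      assume "ZZ m n (H m n k t) S \<noteq> {}"
      then obtain y where y: "y \<in> {n+1..m}" "insert y ({1..n} - S) \<in> H m n k t" unfolding ZZ_def by auto
      then have "insert y ({1..n} - S) \<inter> {n+1..m} \<noteq> {}" by auto
      then have "t \<in> insert y ({1..n} - S)" using H_char[OF t, THEN iffD1, OF y(2)] by blast
      then show False using True y(1) t by auto
    qed
    show ?thesis unfolding ww_def E Z using True card_pairsY by simp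
  next
    case False
    have E: "EE m n (H m n k t) S = {}"
    proof (rule ccontr)
      assume "EE m n (H m n k t) S \<noteq> {}"
      then obtain e where e: "e \<subseteq> {n+1..m}" "card e = 2" "S \<union> e \<in> H m n k t" unfolding EE_def by auto
      have "(S \<union> e) \<inter> {n+1..m} = e" by (rule NY_facts(2)[OF S(1) e(1)])
      moreover have "e \<noteq> {}" using e(2) by auto
      ultimately have "t \<in> S \<union> e" using H_char[OF t, THEN iffD1, OF e(3)] by auto
      then show False using False e(1) t by auto
    qed
    have Z: "ZZ m n (H m n k t) S = {n+1..m}"
    proof (intro equalityI subsetI)
      fix y assume "y \<in> ZZ m n (H m n k t) S" then show "y \<in> {n+1..m}" unfolding ZZ_def by auto
    next
      fix y assume y: "y \<in> {n+1..m}"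
      have "card ({1..n} - S) = n - (k-2)" using card_Diff_subset[OF finS S(1)] S(2) by simp
      moreover have "y \<notin> {1..n} - S" using y by auto
      ultimately have "card (insert y ({1..n} - S)) = n - (k-2) + 1" by simp
      then have "card (insert y ({1..n} - S)) = k" using nk k3 by linarith
      moreover have "insert y ({1..n} - S) \<inter> {n+1..m} = {y}" using y by auto
      moreover have "insert y ({1..n} - S) \<subseteq> {1..m}" using y basics(3) by auto
      moreover have "t \<in> insert y ({1..n} - S)" using t False by auto
      ultimately have "insert y ({1..n} - S) \<in> H m n k t" by (intro H_char[OF t, THEN iffD2]) auto
      then show "y \<in> ZZ m n (H m n k t) S" unfolding ZZ_def using y by auto
    qed
    show ?thesis unfolding ww_def E Z using False by simp
  qed
qed

lemma H_card:
  assumes t: "t \<in> {1..n}"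
  shows "card (H m n k t) = h m n k"
proof -
  let ?K = "{S. S \<subseteq> {1..n} \<and> card S = k-2}"
  let ?M = "(m - n) choose 2" and ?p = "m - n"
  have "card (H m n k t) = (n choose k) + (\<Sum>S\<in>?K. ww m n (H m n k t) S)"
    by (rule decomp[OF H_mnk[OF t]])
  also have "(\<Sum>S\<in>?K. ww m n (H m n k t) S) = (\<Sum>S\<in>?K. if t \<in> S then ?M else ?p)"
    by (rule sum.cong) (use H_ww[OF t] in auto)
  also have "\<dots> = (\<Sum>S\<in>?K \<inter> {S. t \<in> S}. ?M) + (\<Sum>S\<in>?K \<inter> - {S. t \<in> S}. ?p)"
    by (rule sum.If_cases) (rule fin_sub, simp)
  also have "?K \<inter> {S. t \<in> S} = {S. S \<subseteq> {1..n} \<and> card S = k-2 \<and> t \<in> S}" by auto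
  also have "?K \<inter> - {S. t \<in> S} = {S. S \<subseteq> {1..n} \<and> card S = k-2 \<and> t \<notin> S}" by auto
  finally have e: "card (H m n k t) = (n choose k) + card {S. S \<subseteq> {1..n} \<and> card S = k-2 \<and> t \<in> S} * ?M
      + card {S. S \<subseteq> {1..n} \<and> card S = k-2 \<and> t \<notin> S} * ?p" by simp
  have c1: "card {S. S \<subseteq> {1..n} \<and> card S = k-2 \<and> t \<in> S} = (2*(k-2)) choose (k-2-1)"
    using card_star[OF _ t basics(2)] basics(1) by simp
  have c0: "card {S. S \<subseteq> {1..n} \<and> card S = k-2 \<and> t \<notin> S} = (2*(k-2)) choose (k-2)"
    using card_nonstar[OF _ t, of "k-2"] basics(1) by simp
  show ?thesis using e c1 c0 h_eq by (simp add: algebra_simps)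
qed

lemma F_eq_H:
  assumes F: "mnk_intersecting m n k F" and eq: "card F = h m n k"
  shows "\<exists>t\<in>{1..n}. F = H m n k t"
proof -
  obtain t where t: "t \<in> {1..n}" and st: "\<forall>S. S \<subseteq> {1..n} \<and> card S = k-2 \<longrightarrow>
          (t \<in> S \<longrightarrow> ZZ m n F S = {} \<and> EE m n F S = {e. e \<subseteq> {n+1..m} \<and> card e = 2}) \<and>
          (t \<notin> S \<longrightarrow> EE m n F S = {} \<and> ZZ m n F S = {n+1..m})"
    using main_bound(2)[OF F eq] by (elim bexE) blast
  have Fs: "ksubsets {1..n} k \<subseteq> F" using F unfolding mnk_intersecting_def by auto
  have "F = H m n k t"
  proof (intro equalityI subsetI)
    fix G assume G: "G \<in> F"
    have Gm: "G \<subseteq> {1..m}" "card G = k" "card (G \<inter> {n+1..m}) \<le> 2" using member_Y[OF F G] by auto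
    note sp = split_card[OF Gm(1) basics(3)]
    have "t \<in> G" if ne: "G \<inter> {n+1..m} \<noteq> {}"
    proof -
      have "card (G \<inter> {n+1..m}) \<noteq> 0" using ne by simp
      then consider "card (G \<inter> {n+1..m}) = 1" | "card (G \<inter> {n+1..m}) = 2" using Gm(3) by linarith
      then show ?thesis
      proof cases
        case 1
        then obtain y where y: "G \<inter> {n+1..m} = {y}" using card_1_singletonE by blast
        define S where "S = {1..n} - (G \<inter> {1..n})"
        have "card (G \<inter> {1..n}) = k - 1" using sp(3) Gm(2) 1 by linarith
        then have "card S = n - (k - 1)" unfolding S_def by (simp add: card_Diff_subset)
        moreover have "n - (k - 1) = k - 2" using nk k3 by linarith
        ultimately have S: "S \<subseteq> {1..n}" "card S = k - 2" unfolding S_def by auto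
        have "insert y ({1..n} - S) = G" unfolding S_def using sp(1) y by auto
        then have "y \<in> ZZ m n F S" unfolding ZZ_def using y G by auto
        then have "t \<notin> S" using st[rule_format, OF conjI[OF S]] by auto
        then show ?thesis using t unfolding S_def by auto
      next
        case 2
        define S where "S = G \<inter> {1..n}"
        have "card S = k - 2" unfolding S_def using sp(3) Gm(2) 2 by linarith
        then have S: "S \<subseteq> {1..n}" "card S = k - 2" unfolding S_def by auto
        have "G \<inter> {n+1..m} \<in> EE m n F S" unfolding EE_def S_def using 2 G sp(1) by auto
        then have "t \<in> S" using st[rule_format, OF conjI[OF S]] by auto
        then show ?thesis unfolding S_def by auto
      qed
    qed
    then show "G \<in> H m n k t" using Gm by (intro H_char[OF t, THEN iffD2]) auto
  next
    fix G assume G: "G \<in> H m n k t"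
    then have P: "G \<subseteq> {1..m}" "card G = k" "card (G \<inter> {n+1..m}) \<le> 2"
      "G \<inter> {n+1..m} \<noteq> {} \<longrightarrow> t \<in> G" using H_char[OF t, THEN iffD1, OF G] by auto
    note sp = split_card[OF P(1) basics(3)]
    show "G \<in> F"
    proof (cases "G \<inter> {n+1..m} = {}")
      case True
      then have "G \<subseteq> {1..n}" using sp(1) by auto
      then have "G \<in> ksubsets {1..n} k" using P(2) unfolding ksubsets_def by simp
      then show ?thesis using Fs by auto
    next
      case False
      then have tG: "t \<in> G" using P by auto
      have "card (G \<inter> {n+1..m}) \<noteq> 0" using False by simp
      then consider "card (G \<inter> {n+1..m}) = 1" | "card (G \<inter> {n+1..m}) = 2" using P(3) by linarith
      then show ?thesis
      proof cases
        case 1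
        then obtain y where y: "G \<inter> {n+1..m} = {y}" using card_1_singletonE by blast
        define S where "S = {1..n} - (G \<inter> {1..n})"
        have "card (G \<inter> {1..n}) = k - 1" using sp(3) P(2) 1 by linarith
        then have "card S = n - (k - 1)" unfolding S_def by (simp add: card_Diff_subset)
        moreover have "n - (k - 1) = k - 2" using nk k3 by linarith
        ultimately have S: "S \<subseteq> {1..n}" "card S = k - 2" unfolding S_def by auto
        have "t \<notin> S" using tG t unfolding S_def by auto
        then have "ZZ m n F S = {n+1..m}" using st[rule_format, OF conjI[OF S]] by auto
        moreover have yY: "y \<in> {n+1..m}" using y by auto
        ultimately have "y \<in> ZZ m n F S" by simp
        then have "insert y ({1..n} - S) \<in> F" unfolding ZZ_def by simp
        moreover have "insert y ({1..n} - S) = G" unfolding S_def using sp(1) y by auto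
        ultimately show ?thesis by simp
      next
        case 2
        define S where "S = G \<inter> {1..n}"
        have "card S = k - 2" unfolding S_def using sp(3) P(2) 2 by linarith
        then have S: "S \<subseteq> {1..n}" "card S = k - 2" unfolding S_def by auto
        have "t \<in> S" using tG t unfolding S_def by auto
        then have "EE m n F S = {e. e \<subseteq> {n+1..m} \<and> card e = 2}" using st[rule_format, OF conjI[OF S]] by auto
        moreover have "G \<inter> {n+1..m} \<in> {e. e \<subseteq> {n+1..m} \<and> card e = 2}" using 2 by simp
        ultimately have "G \<inter> {n+1..m} \<in> EE m n F S" by simp
        then have "S \<union> (G \<inter> {n+1..m}) \<in> F" unfolding EE_def by auto
        then show ?thesis using sp(1) unfolding S_def by simp
      qed
    qed
  qed
  then show ?thesis using t by blast
qed

lemma alpha_eq: "alpha m n k = h m n k"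
  unfolding alpha_def
proof (rule Max_eqI)
  have "{F. mnk_intersecting m n k F} \<subseteq> Pow (ksubsets {1..m} k)"
    unfolding mnk_intersecting_def by auto
  moreover have "finite (ksubsets {1..m} k)" unfolding ksubsets_def by (rule fin_sub) simp
  ultimately have "finite {F. mnk_intersecting m n k F}" by (meson finite_Pow_iff finite_subset)
  then show "finite (card ` {F. mnk_intersecting m n k F})" by simp
  show "y \<le> h m n k" if "y \<in> card ` {F. mnk_intersecting m n k F}" for y
    using that main_bound(1) by auto
  have t1: "1 \<in> {1..n}" using basics(1) by simp
  show "h m n k \<in> card ` {F. mnk_intersecting m n k F}"
    using H_mnk[OF t1] H_card[OF t1] by (metis (mono_tags, lifting) image_eqI mem_Collect_eq)
qed

theorem main:
  "alpha m n k = h m n k \<and>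
    (\<forall>F. mnk_intersecting m n k F \<and> card F = alpha m n k \<longrightarrow>
         (\<exists>t\<in>{1..n}. F = H m n k t))"
  using alpha_eq F_eq_H by auto

end

theorem theorem11:
  fixes k m n :: nat
  assumes "k \<ge> 3" and "m > 2*k" and "n = 2*k - 3"
  shows "alpha m n k = h m n k \<and>
    (\<forall>F. mnk_intersecting m n k F \<and> card F = alpha m n k \<longrightarrow>
         (\<exists>t\<in>{1..n}. F = H m n k t))"
proof -
  interpret LS k m n using assms by unfold_locales
  show ?thesis by (rule main)
qed

end
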